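(* Let $(R,\cdot_\lambda\cdot,\alpha,\beta)$ be a regular BiHom-associative conformal superalgebra (so $\alpha,\beta$ are bijective and even). Then the $\lambda$-bracket $$[a_\lambda b]=a_\lambda b-(-1)^{|a||b|}\,\alpha^{-1}\beta(b)_{-\lambda-\partial}\,\alpha\beta^{-1}(a),\qquad a,b\in R \text{ homogeneous},$$ defines a BiHom-Lie conformal superalgebra structure $(R,[\cdot_\lambda\cdot],\alpha,\beta)$ on $R$.
   Context: All spaces are over $\mathbb{C}$. For a $\mathbb{C}[\partial]$-module $V$, $V[\lambda]=\mathbb{C}[\lambda]\otimes V$. $|a|$ denotes the parity of a homogeneous element. In $x_{-\lambda-\partial}y$ one writes $x_\lambda y=\sum_n\lambda^nc_n$ and replaces $\lambda$ by $-\lambda-\partial$, $\partial$ acting on the $c_n$. A BiHom-associative conformal superalgebra is a $\mathbb{Z}_2$-graded $\mathbb{C}[\partial]$-module $R=R_0\oplus R_1$ with two commuting even linear maps $\alpha,\beta:R\to R$ and a $\mathbb{C}$-linear $\lambda$-product $R\otimes R\to R[\lambda]$, $a\otimes b\mapsto a_\lambda b$, with $R_{i\,\lambda}R_j\subseteq R_{i+j}[\lambda]$, such that for all $a,b,c\in R$: $(\partial a)_\lambda b=-\lambda\, a_\lambda b$, $a_\lambda(\partial b)=(\partial+\lambda)a_\lambda b$; $\alpha\partial=\partial\alpha$, $\beta\partial=\partial\beta$; $\alpha(a_\lambda b)=\alpha(a)_\lambda\alpha(b)$, $\beta(a_\lambda b)=\beta(a)_\lambda\beta(b)$; and $\alpha(a)_\lambda(b_\mu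 c)=(a_\lambda b)_{\lambda+\mu}\beta(c)$. It is regular if $\alpha,\beta$ are bijective. A BiHom-Lie conformal superalgebra $(R,[\cdot_\lambda\cdot],\alpha,\beta)$ is a $\mathbb{Z}_2$-graded $\mathbb{C}[\partial]$-module $R$ with two commuting linear maps $\alpha,\beta$ and a $\mathbb{C}$-linear map $R\otimes R\to R[\lambda]$, $a\otimes b\mapsto[a_\lambda b]$, with $[R_{i\,\lambda}R_j]\subseteq R_{i+j}[\lambda]$, such that for all homogeneous $a,b,c$: (1) $\alpha\partial=\partial\alpha$, $\beta\partial=\partial\beta$; (2) $\alpha([a_\lambda b])=[\alpha(a)_\lambda\alpha(b)]$, $\beta([a_\lambda b])=[\beta(a)_\lambda\beta(b)]$; (3) $[(\partial a)_\lambda b]=-\lambda[a_\lambda b]$, $[a_\lambda(\partial b)]=(\partial+\lambda)[a_\lambda b]$; (4) $[\beta(a)_\lambda\alpha(b)]=-(-1)^{|a||b|}[\beta(b)_{-\lambda-\partial}\alpha(a)]$; (5) $[\alpha\beta(a)_\lambda[b_\mu c]]=[[\beta(a)_\lambda b]_{\lambda+\mu}\beta(c)]+(-1)^{|a||b|}[\beta(b)_\mu[\alpha(a)_\lambda c]]$. *)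

theory Defs
  imports Complex_Main
begin

text \<open>R is a type 'r with a complex scalar multiplication scale
(a C-vector space), D is the action of the derivation, Rg 0 and Rg 1 are the
even and odd parts. An element of R[lambda] is represented by its (finitely
supported) coefficient sequence: f n is the coefficient of lambda^n.
An element of R[lambda,mu] is represented by g i j, the coefficient of
lambda^i mu^j. A lambda-product is thus mu :: 'r => 'r => nat => 'r with
a_lambda b = sum_n lambda^n (mu a b n).\<close>

definition clin :: "(complex \<Rightarrow> 'r::ab_group_add \<Rightarrow> 'r) \<Rightarrow> ('r \<Rightarrow> 'r) \<Rightarrow> bool" where
  "clin scale f \<longleftrightarrow> (\<forall>x y. f (x + y) = f x + f y) \<and> (\<forall>c x. f (scale c x) = scale c (f x))"

definition csubspace :: "(complex \<Rightarrow> 'r::ab_group_add \<Rightarrow> 'r) \<Rightarrow> 'r set \<Rightarrow> bool" where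
  "csubspace scale S \<longleftrightarrow> 0 \<in> S \<and> (\<forall>x\<in>S. \<forall>y\<in>S. x + y \<in> S) \<and> (\<forall>c. \<forall>x\<in>S. scale c x \<in> S)"

definition graded_CD_module ::
  "(complex \<Rightarrow> 'r::ab_group_add \<Rightarrow> 'r) \<Rightarrow> ('r \<Rightarrow> 'r) \<Rightarrow> (nat \<Rightarrow> 'r set) \<Rightarrow> bool" where
  "graded_CD_module scale D Rg \<longleftrightarrow>
     vector_space scale \<and> clin scale D \<and>
     csubspace scale (Rg 0) \<and> csubspace scale (Rg 1) \<and>
     Rg 0 \<inter> Rg 1 = {0} \<and> (\<forall>a. \<exists>x\<in>Rg 0. \<exists>y\<in>Rg 1. a = x + y) \<and>
     (\<forall>i<2. D ` Rg i \<subseteq> Rg i)"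

definition gcomp :: "(nat \<Rightarrow> 'r::ab_group_add set) \<Rightarrow> nat \<Rightarrow> 'r \<Rightarrow> 'r" where
  "gcomp Rg i a = (THE x. x \<in> Rg i \<and> a - x \<in> Rg (1 - i))"

text \<open>Multiplication by lambda on R[lambda].\<close>
definition shiftL :: "(nat \<Rightarrow> 'r::zero) \<Rightarrow> nat \<Rightarrow> 'r" where
  "shiftL f n = (if n = 0 then 0 else f (n - 1))"

text \<open>Substitution lambda := -lambda-partial: if f represents sum_n lambda^n c_n then
  sum_n (-lambda-partial)^n c_n has lambda^k-coefficient
  sum_{n>=k} (-1)^n (n choose k) partial^(n-k) c_n.\<close>
definition subst_neg ::
  "(complex \<Rightarrow> 'r::ab_group_add \<Rightarrow> 'r) \<Rightarrow> ('r \<Rightarrow> 'r) \<Rightarrow> (nat \<Rightarrow> 'r) \<Rightarrow> nat \<Rightarrow> 'r" where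
  "subst_neg scale D f k =
     (\<Sum>n\<in>{n. k \<le> n \<and> f n \<noteq> 0}. scale ((-1) ^ n * of_nat (n choose k)) ((D ^^ (n - k)) (f n)))"

text \<open>Given a lambda-product g, an element d of R[lambda] (d = sum_m lambda^m d_m) and z in R,
  the element d_(lambda+mu) z = sum_m lambda^m sum_n (lambda+mu)^n (g (d_m) z n) of R[lambda,mu];
  its lambda^i mu^j-coefficient is sum_{m<=i} ((i-m+j) choose j) g (d_m) z (i-m+j).\<close>
definition plus_subst ::
  "(complex \<Rightarrow> 'r::ab_group_add \<Rightarrow> 'r) \<Rightarrow> ('r \<Rightarrow> 'r \<Rightarrow> nat \<Rightarrow> 'r) \<Rightarrow> (nat \<Rightarrow> 'r) \<Rightarrow> 'r \<Rightarrow> nat \<Rightarrow> nat \<Rightarrow> 'r" where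
  "plus_subst scale g d z i j = (\<Sum>m\<le>i. scale (of_nat ((i - m + j) choose j)) (g (d m) z (i - m + j)))"

definition graded_lprod ::
  "(complex \<Rightarrow> 'r::ab_group_add \<Rightarrow> 'r) \<Rightarrow> (nat \<Rightarrow> 'r set) \<Rightarrow> ('r \<Rightarrow> 'r \<Rightarrow> nat \<Rightarrow> 'r) \<Rightarrow> bool" where
  "graded_lprod scale Rg m \<longleftrightarrow>
     (\<forall>a b. finite {n. m a b n \<noteq> 0}) \<and>
     (\<forall>b n. clin scale (\<lambda>a. m a b n)) \<and> (\<forall>a n. clin scale (\<lambda>b. m a b n)) \<and>
     (\<forall>i<2. \<forall>j<2. \<forall>a\<in>Rg i. \<forall>b\<in>Rg j. \<forall>n. m a b n \<in> Rg ((i + j) mod 2))"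

definition BiHom_assoc_conf_super ::
  "(complex \<Rightarrow> 'r::ab_group_add \<Rightarrow> 'r) \<Rightarrow> ('r \<Rightarrow> 'r) \<Rightarrow> (nat \<Rightarrow> 'r set) \<Rightarrow>
   ('r \<Rightarrow> 'r \<Rightarrow> nat \<Rightarrow> 'r) \<Rightarrow> ('r \<Rightarrow> 'r) \<Rightarrow> ('r \<Rightarrow> 'r) \<Rightarrow> bool" where
  "BiHom_assoc_conf_super scale D Rg m al be \<longleftrightarrow>
     graded_CD_module scale D Rg \<and> graded_lprod scale Rg m \<and>
     clin scale al \<and> clin scale be \<and> al \<circ> be = be \<circ> al \<and>
     (\<forall>i<2. al ` Rg i \<subseteq> Rg i \<and> be ` Rg i \<subseteq> Rg i) \<and>
     (\<forall>a b n. m (D a) b n = - shiftL (m a b) n) \<and>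
     (\<forall>a b n. m a (D b) n = D (m a b n) + shiftL (m a b) n) \<and>
     al \<circ> D = D \<circ> al \<and> be \<circ> D = D \<circ> be \<and>
     (\<forall>a b n. al (m a b n) = m (al a) (al b) n) \<and>
     (\<forall>a b n. be (m a b n) = m (be a) (be b) n) \<and>
     (\<forall>a b c i j. m (al a) (m b c j) i = plus_subst scale m (m a b) (be c) i j)"

definition regular_BiHom_assoc_conf_super where
  "regular_BiHom_assoc_conf_super scale D Rg m al be \<longleftrightarrow>
     BiHom_assoc_conf_super scale D Rg m al be \<and> bij al \<and> bij be"

definition BiHom_Lie_conf_super ::
  "(complex \<Rightarrow> 'r::ab_group_add \<Rightarrow> 'r) \<Rightarrow> ('r \<Rightarrow> 'r) \<Rightarrow> (nat \<Rightarrow> 'r set) \<Rightarrow>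
   ('r \<Rightarrow> 'r \<Rightarrow> nat \<Rightarrow> 'r) \<Rightarrow> ('r \<Rightarrow> 'r) \<Rightarrow> ('r \<Rightarrow> 'r) \<Rightarrow> bool" where
  "BiHom_Lie_conf_super scale D Rg br al be \<longleftrightarrow>
     graded_CD_module scale D Rg \<and> graded_lprod scale Rg br \<and>
     clin scale al \<and> clin scale be \<and> al \<circ> be = be \<circ> al \<and>
     al \<circ> D = D \<circ> al \<and> be \<circ> D = D \<circ> be \<and>
     (\<forall>a b n. al (br a b n) = br (al a) (al b) n) \<and>
     (\<forall>a b n. be (br a b n) = br (be a) (be b) n) \<and>
     (\<forall>a b n. br (D a) b n = - shiftL (br a b) n) \<and>
     (\<forall>a b n. br a (D b) n = D (br a b n) + shiftL (br a b) n) \<and>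
     (\<forall>i<2. \<forall>j<2. \<forall>a\<in>Rg i. \<forall>b\<in>Rg j. \<forall>n.
        br (be a) (al b) n = - scale ((-1) ^ (i * j)) (subst_neg scale D (br (be b) (al a)) n)) \<and>
     (\<forall>i<2. \<forall>j<2. \<forall>k<2. \<forall>a\<in>Rg i. \<forall>b\<in>Rg j. \<forall>c\<in>Rg k. \<forall>p q.
        br (al (be a)) (br b c q) p =
          plus_subst scale br (br (be a) b) (be c) p q
          + scale ((-1) ^ (i * j)) (br (be b) (br (al a) c p) q))"

text \<open>The bracket [a_lambda b] = a_lambda b - (-1)^(|a||b|) alpha^-1 beta(b)_(-lambda-partial) alpha beta^-1(a)
  on homogeneous elements, extended bilinearly via homogeneous components.\<close>
definition induced_bracket ::
  "(complex \<Rightarrow> 'r::ab_group_add \<Rightarrow> 'r) \<Rightarrow> ('r \<Rightarrow> 'r) \<Rightarrow> (nat \<Rightarrow> 'r set) \<Rightarrow>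
   ('r \<Rightarrow> 'r \<Rightarrow> nat \<Rightarrow> 'r) \<Rightarrow> ('r \<Rightarrow> 'r) \<Rightarrow> ('r \<Rightarrow> 'r) \<Rightarrow> 'r \<Rightarrow> 'r \<Rightarrow> nat \<Rightarrow> 'r" where
  "induced_bracket scale D Rg m al be a b n =
     m a b n - (\<Sum>i<2. \<Sum>j<2. scale ((-1) ^ (i * j))
        (subst_neg scale D (m (inv al (be (gcomp Rg j b))) (al (inv be (gcomp Rg i a)))) n))"

end

theory Submission
  imports Defs "HOL-Library.Function_Algebras"
begin

lemma sum_fun_app: "(sum f A) x = (\<Sum>i\<in>A. f i x)"
  by (induct A rule: infinite_finite_induct) auto

definition fin1 :: "(nat \<Rightarrow> 'a::zero) \<Rightarrow> bool" where
  "fin1 f \<longleftrightarrow> (\<exists>N. \<forall>n. f n \<noteq> 0 \<longrightarrow> n < N)"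
definition fin2 :: "(nat \<Rightarrow> nat \<Rightarrow> 'a::zero) \<Rightarrow> bool" where
  "fin2 h \<longleftrightarrow> (\<exists>N. \<forall>a b. h a b \<noteq> 0 \<longrightarrow> a + b < N)"
definition cst1 :: "'a::zero \<Rightarrow> nat \<Rightarrow> 'a" where
  "cst1 c n = (if n = 0 then c else 0)"
definition cst2 :: "'a::zero \<Rightarrow> nat \<Rightarrow> nat \<Rightarrow> 'a" where
  "cst2 c a b = (if a = 0 \<and> b = 0 then c else 0)"
definition sL :: "(nat \<Rightarrow> nat \<Rightarrow> 'a::zero) \<Rightarrow> nat \<Rightarrow> nat \<Rightarrow> 'a" where
  "sL h a b = (if a = 0 then 0 else h (a - 1) b)"
definition sM :: "(nat \<Rightarrow> nat \<Rightarrow> 'a::zero) \<Rightarrow> nat \<Rightarrow> nat \<Rightarrow> 'a" where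
  "sM h a b = (if b = 0 then 0 else h a (b - 1))"
definition emb :: "(nat \<Rightarrow> 'a::zero) \<Rightarrow> nat \<Rightarrow> nat \<Rightarrow> 'a" where
  "emb f a b = (if b = 0 then f a else 0)"
definition swp :: "(nat \<Rightarrow> nat \<Rightarrow> 'a) \<Rightarrow> nat \<Rightarrow> nat \<Rightarrow> 'a" where
  "swp h a b = h b a"

lemma lam0_1[simp]: "(\<lambda>a. 0) = (0::'a\<Rightarrow>'b::zero)" by (simp add: fun_eq_iff)
lemma lam0_2[simp]: "(\<lambda>a b. 0) = (0::'a\<Rightarrow>'c\<Rightarrow>'b::zero)" by (simp add: fun_eq_iff)

lemma cst2_0[simp]: "cst2 0 = 0" by (auto simp: cst2_def fun_eq_iff)
lemma cst1_0[simp]: "cst1 0 = 0" by (auto simp: cst1_def fun_eq_iff)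
lemma cst2_add: "cst2 (x + y) = cst2 x + cst2 (y::'a::monoid_add)" by (auto simp: cst2_def fun_eq_iff)
lemma cst1_add: "cst1 (x + y) = cst1 x + cst1 (y::'a::monoid_add)" by (auto simp: cst1_def fun_eq_iff)
lemma sL_add: "sL (h1 + h2) = sL h1 + sL (h2::nat\<Rightarrow>nat\<Rightarrow>'a::monoid_add)" by (auto simp: sL_def fun_eq_iff)
lemma sM_add: "sM (h1 + h2) = sM h1 + sM (h2::nat\<Rightarrow>nat\<Rightarrow>'a::monoid_add)" by (auto simp: sM_def fun_eq_iff)
lemma sL_0[simp]: "sL 0 = 0" by (auto simp: sL_def fun_eq_iff)
lemma sM_0[simp]: "sM 0 = 0" by (auto simp: sM_def fun_eq_iff)
lemma shiftL_add: "shiftL (f + g) = shiftL f + shiftL (g::nat\<Rightarrow>'a::monoid_add)" by (auto simp: shiftL_def fun_eq_iff)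
lemma emb_add: "emb (f + g) = emb f + emb (g::nat\<Rightarrow>'a::monoid_add)" by (auto simp: emb_def fun_eq_iff)
lemma emb_shiftL: "emb (shiftL f) = sL (emb f)" by (auto simp: emb_def sL_def shiftL_def fun_eq_iff)
lemma emb_cst1: "emb (cst1 c) = cst2 c" by (auto simp: emb_def cst1_def cst2_def fun_eq_iff)

lemma fin1_bound: "fin1 f \<Longrightarrow> \<exists>N. \<forall>n. f n \<noteq> 0 \<longrightarrow> n < N" by (simp add: fin1_def)
lemma fin1_0[simp]: "fin1 0" by (auto simp: fin1_def)
lemma fin1_add: "fin1 f \<Longrightarrow> fin1 g \<Longrightarrow> fin1 (f + (g::nat\<Rightarrow>'a::monoid_add))"
proof -
  assume "fin1 f" "fin1 g"
  then obtain N1 N2 where N1: "\<forall>n. f n \<noteq> 0 \<longrightarrow> n < N1" and N2: "\<forall>n. g n \<noteq> 0 \<longrightarrow> n < N2"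
    by (auto simp: fin1_def)
  show ?thesis unfolding fin1_def
  proof (intro exI allI impI)
    fix n assume "(f + g) n \<noteq> 0"
    then have "f n \<noteq> 0 \<or> g n \<noteq> 0" by auto
    then show "n < max N1 N2" using N1 N2 by (auto simp: less_max_iff_disj)
  qed
qed
lemma fin1_cst1[simp]: "fin1 (cst1 c)" by (auto simp: fin1_def cst1_def intro: exI[of _ 1])
lemma fin1_shiftL: "fin1 f \<Longrightarrow> fin1 (shiftL f)"
proof -
  assume "fin1 f"
  then obtain N where N: "\<forall>n. f n \<noteq> 0 \<longrightarrow> n < N" by (auto simp: fin1_def)
  show ?thesis unfolding fin1_def shiftL_def
    by (rule exI[of _ "Suc N"]) (use N in auto)
qed
lemma fin2_0[simp]: "fin2 0" by (auto simp: fin2_def)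
lemma fin2_add: "fin2 f \<Longrightarrow> fin2 g \<Longrightarrow> fin2 (f + (g::nat\<Rightarrow>nat\<Rightarrow>'a::monoid_add))"
proof -
  assume "fin2 f" "fin2 g"
  then obtain N1 N2 where N1: "\<forall>a b. f a b \<noteq> 0 \<longrightarrow> a + b < N1" and N2: "\<forall>a b. g a b \<noteq> 0 \<longrightarrow> a + b < N2"
    by (auto simp: fin2_def)
  then show ?thesis unfolding fin2_def
  proof (intro exI allI impI)
    fix a b assume "(f + g) a b \<noteq> 0"
    then have "f a b \<noteq> 0 \<or> g a b \<noteq> 0" by auto
    then show "a + b < max N1 N2" using N1 N2 by (auto simp: less_max_iff_disj)
  qed
qed
lemma fin2_cst2[simp]: "fin2 (cst2 c)" by (auto simp: fin2_def cst2_def intro: exI[of _ 1])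
lemma fin2_sL: "fin2 h \<Longrightarrow> fin2 (sL h)"
proof -
  assume "fin2 h"
  then obtain N where N: "\<forall>a b. h a b \<noteq> 0 \<longrightarrow> a + b < N" by (auto simp: fin2_def)
  show ?thesis unfolding fin2_def
  proof (intro exI allI impI)
    fix a b assume "sL h a b \<noteq> 0"
    then have "a \<noteq> 0" "h (a-1) b \<noteq> 0" by (auto simp: sL_def split: if_splits)
    then show "a + b < Suc N" using N[rule_format, of "a-1" b] by auto
  qed
qed
lemma fin2_sM: "fin2 h \<Longrightarrow> fin2 (sM h)"
proof -
  assume "fin2 h"
  then obtain N where N: "\<forall>a b. h a b \<noteq> 0 \<longrightarrow> a + b < N" by (auto simp: fin2_def)
  show ?thesis unfolding fin2_def
  proof (intro exI allI impI)
    fix a b assume "sM h a b \<noteq> 0"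
    then have "b \<noteq> 0" "h a (b-1) \<noteq> 0" by (auto simp: sM_def split: if_splits)
    then show "a + b < Suc N" using N[rule_format, of a "b-1"] by auto
  qed
qed
lemma fin2_emb: "fin1 f \<Longrightarrow> fin2 (emb f)"
  unfolding fin1_def fin2_def emb_def by auto
lemma fin2_swp: "fin2 h \<Longrightarrow> fin2 (swp h)"
  unfolding fin2_def swp_def by (metis add.commute)
lemma fin2_imp: "(\<forall>a b. h a b \<noteq> 0 \<longrightarrow> a + b < N) \<Longrightarrow> fin2 h" unfolding fin2_def by blast

lemma U1:
  fixes \<Phi> \<Psi> :: "(nat \<Rightarrow> 'a::monoid_add) \<Rightarrow> 'b::monoid_add"
  assumes "\<And>f g. fin1 f \<Longrightarrow> fin1 g \<Longrightarrow> \<Phi> (f + g) = \<Phi> f + \<Phi> g"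
    and "\<And>f g. fin1 f \<Longrightarrow> fin1 g \<Longrightarrow> \<Psi> (f + g) = \<Psi> f + \<Psi> g"
    and "\<And>c. \<Phi> (cst1 c) = \<Psi> (cst1 c)"
    and "\<And>f. fin1 f \<Longrightarrow> \<Phi> (shiftL f) = A (\<Phi> f)"
    and "\<And>f. fin1 f \<Longrightarrow> \<Psi> (shiftL f) = A (\<Psi> f)"
    and "fin1 f"
  shows "\<Phi> f = \<Psi> f"
proof -
  have "\<forall>f. (\<forall>n. f n \<noteq> 0 \<longrightarrow> n < N) \<longrightarrow> \<Phi> f = \<Psi> f" for N
  proof (induct N)
    case 0
    show ?case
    proof (intro allI impI)
      fix h :: "nat \<Rightarrow> 'a" assume "\<forall>n. h n \<noteq> 0 \<longrightarrow> n < (0::nat)"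
      then have "h = 0" by (auto simp: fun_eq_iff)
      then show "\<Phi> h = \<Psi> h" using assms(3)[of 0] by (simp only: cst1_0)
    qed
  next
    case (Suc N)
    show ?case
    proof (intro allI impI)
      fix f :: "nat \<Rightarrow> 'a" assume f: "\<forall>n. f n \<noteq> 0 \<longrightarrow> n < Suc N"
      define g where "g = (\<lambda>n. f (Suc n))"
      have g: "\<forall>n. g n \<noteq> 0 \<longrightarrow> n < N" using f by (auto simp: g_def)
      then have fg: "fin1 g" by (auto simp: fin1_def)
      have e: "f = cst1 (f 0) + shiftL g"
        by (auto simp: fun_eq_iff cst1_def shiftL_def g_def)
      have "\<Phi> f = \<Phi> (cst1 (f 0)) + A (\<Phi> g)"
        by (subst e, subst assms(1)) (auto simp: fg fin1_shiftL assms(4))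
      also have "\<dots> = \<Psi> (cst1 (f 0)) + A (\<Psi> g)" using Suc g assms(3) by auto
      also have "\<dots> = \<Psi> f"
        by (subst (2) e, subst assms(2)) (auto simp: fg fin1_shiftL assms(5))
      finally show "\<Phi> f = \<Psi> f" .
    qed
  qed
  then show ?thesis using assms(6) by (auto simp: fin1_def)
qed

lemma U2:
  fixes \<Phi> \<Psi> :: "(nat \<Rightarrow> nat \<Rightarrow> 'a::monoid_add) \<Rightarrow> 'b::monoid_add"
  assumes "\<And>f g. fin2 f \<Longrightarrow> fin2 g \<Longrightarrow> \<Phi> (f + g) = \<Phi> f + \<Phi> g"
    and "\<And>f g. fin2 f \<Longrightarrow> fin2 g \<Longrightarrow> \<Psi> (f + g) = \<Psi> f + \<Psi> g"
    and "\<And>c. \<Phi> (cst2 c) = \<Psi> (cst2 c)"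
    and "\<And>f. fin2 f \<Longrightarrow> \<Phi> (sL f) = A (\<Phi> f)"
    and "\<And>f. fin2 f \<Longrightarrow> \<Psi> (sL f) = A (\<Psi> f)"
    and "\<And>f. fin2 f \<Longrightarrow> \<Phi> (sM f) = B (\<Phi> f)"
    and "\<And>f. fin2 f \<Longrightarrow> \<Psi> (sM f) = B (\<Psi> f)"
    and "fin2 h"
  shows "\<Phi> h = \<Psi> h"
proof -
  have "\<forall>h. (\<forall>a b. h a b \<noteq> 0 \<longrightarrow> a + b < N) \<longrightarrow> \<Phi> h = \<Psi> h" for N
  proof (induct N)
    case 0
    show ?case
    proof (intro allI impI)
      fix h :: "nat \<Rightarrow> nat \<Rightarrow> 'a" assume "\<forall>a b. h a b \<noteq> 0 \<longrightarrow> a + b < (0::nat)"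
      then have "h = 0" by (auto simp: fun_eq_iff)
      then show "\<Phi> h = \<Psi> h" using assms(3)[of 0] by (simp only: cst2_0)
    qed
  next
    case (Suc N)
    show ?case
    proof (intro allI impI)
      fix h :: "nat \<Rightarrow> nat \<Rightarrow> 'a" assume h: "\<forall>a b. h a b \<noteq> 0 \<longrightarrow> a + b < Suc N"
      define g1 where "g1 = (\<lambda>(a::nat) (b::nat). if a = 0 then h 0 (Suc b) else 0)"
      define g2 where "g2 = (\<lambda>(a::nat) (b::nat). h (Suc a) b)"
      have g1: "\<forall>a b. g1 a b \<noteq> 0 \<longrightarrow> a + b < N"
      proof (intro allI impI)
        fix a b assume "g1 a b \<noteq> 0"
        then have "a = 0" "h 0 (Suc b) \<noteq> 0" by (auto simp: g1_def split: if_splits)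
        then show "a + b < N" using h[rule_format, of 0 "Suc b"] by auto
      qed
      have g2: "\<forall>a b. g2 a b \<noteq> 0 \<longrightarrow> a + b < N" using h by (fastforce simp: g2_def)
      have f1: "fin2 g1" and f2: "fin2 g2" using g1 g2 by (auto simp: fin2_def)
      have e: "h = cst2 (h 0 0) + (sM g1 + sL g2)"
        by (auto simp: fun_eq_iff cst2_def sM_def sL_def g1_def g2_def)
      have fs: "fin2 (sM g1 + sL g2)" by (intro fin2_add fin2_sM fin2_sL f1 f2)
      have "\<Phi> h = \<Phi> (cst2 (h 0 0)) + (B (\<Phi> g1) + A (\<Phi> g2))"
        by (subst e, subst assms(1)) (auto simp: fs assms(1,4,6) f1 f2 fin2_sM fin2_sL)
      also have "\<dots> = \<Psi> (cst2 (h 0 0)) + (B (\<Psi> g1) + A (\<Psi> g2))" using Suc g1 g2 assms(3) by auto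
      also have "\<dots> = \<Psi> (cst2 (h 0 0) + (sM g1 + sL g2))"
        by (simp add: fs assms(2,5,7) f1 f2 fin2_sM fin2_sL)
      also have "\<dots> = \<Psi> h" using e by simp
      finally show "\<Phi> h = \<Psi> h" .
    qed
  qed
  then show ?thesis using assms(8) by (auto simp: fin2_def)
qed


locale cfa = module scale for scale :: "complex \<Rightarrow> 'r::ab_group_add \<Rightarrow> 'r" +
  fixes D :: "'r \<Rightarrow> 'r"
  assumes D_add: "D (x + y) = D x + D y" and D_scale: "D (scale c x) = scale c (D x)"
begin

lemma D_zero[simp]: "D 0 = 0" using D_add[of 0 0] by simp
lemma D_minus: "D (- x) = - D x"
proof -
  have "D x + D (- x) = 0" using D_add[of x "-x"] by simp
  then show ?thesis by (metis add.commute minus_unique)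
qed
lemma D_diff: "D (x - y) = D x - D y" using D_add[of x "-y"] D_minus by simp
lemma D_sum: "D (sum f A) = (\<Sum>i\<in>A. D (f i))"
  by (induct A rule: infinite_finite_induct) (auto simp: D_add)
lemma Dp_add: "(D^^n) (x + y) = (D^^n) x + (D^^n) y" by (induct n) (auto simp: D_add)
lemma Dp_zero[simp]: "(D^^n) 0 = 0" by (induct n) auto
lemma Dp_scale: "(D^^n) (scale c x) = scale c ((D^^n) x)" by (induct n) (auto simp: D_scale)
lemma Dp_D: "(D^^n) (D x) = D ((D^^n) x)" by (induct n) auto

definition sc2 :: "complex \<Rightarrow> (nat \<Rightarrow> nat \<Rightarrow> 'r) \<Rightarrow> nat \<Rightarrow> nat \<Rightarrow> 'r" where
  "sc2 k h = (\<lambda>a b. scale k (h a b))"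
definition dd :: "(nat \<Rightarrow> nat \<Rightarrow> 'r) \<Rightarrow> nat \<Rightarrow> nat \<Rightarrow> 'r" where
  "dd h = (\<lambda>a b. D (h a b))"
definition opr :: "complex \<times> complex \<times> complex \<Rightarrow> (nat \<Rightarrow> nat \<Rightarrow> 'r) \<Rightarrow> nat \<Rightarrow> nat \<Rightarrow> 'r" where
  "opr u h = (\<lambda>a b. scale (fst u) (sL h a b) + scale (fst (snd u)) (sM h a b) + scale (snd (snd u)) (D (h a b)))"
definition compo :: "complex \<times> complex \<times> complex \<Rightarrow> complex \<times> complex \<times> complex \<Rightarrow> complex \<times> complex \<times> complex \<Rightarrow> complex \<times> complex \<times> complex" where
  "compo w u v = (fst w * fst u + fst (snd w) * fst v,
                  fst w * fst (snd u) + fst (snd w) * fst (snd v),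
                  fst w * snd (snd u) + fst (snd w) * snd (snd v) + snd (snd w))"

lemma opr_add: "opr u (h1 + h2) = opr u h1 + opr u h2"
  by (simp add: opr_def fun_eq_iff sL_def sM_def D_add scale_right_distrib)
lemma opr_0[simp]: "opr u 0 = 0"
  by (simp add: opr_def fun_eq_iff sL_def sM_def)
lemma oprp_add: "(opr u ^^ n) (h1 + h2) = (opr u ^^ n) h1 + (opr u ^^ n) h2"
  by (induct n) (simp_all only: funpow.simps comp_apply id_apply opr_add)
lemma oprp_0[simp]: "(opr u ^^ n) 0 = 0" by (induct n) auto
lemma oprp_sum: "(opr u ^^ n) (sum f A) = (\<Sum>i\<in>A. (opr u ^^ n) (f i))"
proof (induct A rule: infinite_finite_induct)
  case (infinite A) then show ?case by (metis sum.infinite oprp_0)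
next
  case empty show ?case by (metis sum.empty oprp_0)
next
  case (insert x F) then show ?case by (metis (no_types) sum.insert oprp_add)
qed
lemma opr_sum: "opr u (sum f A) = (\<Sum>i\<in>A. opr u (f i))"
  using oprp_sum[where n=1 and u=u] by simp
lemma opr_comm: "opr u (opr v h) = opr v (opr u h)"
proof -
  have "opr u (opr v h) a b = opr v (opr u h) a b" for a b
  proof (cases a)
    case 0 then show ?thesis
      by (cases b) (simp_all add: opr_def sL_def sM_def D_add D_scale scale_right_distrib mult.commute add_ac)
  next
    case (Suc a') then show ?thesis
      by (cases b) (simp_all add: opr_def sL_def sM_def D_add D_scale scale_right_distrib mult.commute add_ac)
  qed
  then show ?thesis by (simp add: fun_eq_iff)
qed

lemma oprp_comm: "opr u ((opr v ^^ n) h) = (opr v ^^ n) (opr u h)"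
proof (induct n)
  case (Suc n)
  then show ?case by (simp only: funpow.simps comp_apply opr_comm[of u v])
qed simp
lemma opr_sc2: "opr u (sc2 k h) = sc2 k (opr u h)"
  by (auto simp: opr_def sc2_def fun_eq_iff sL_def sM_def D_scale scale_right_distrib mult.commute)
lemma oprp_sc2: "(opr u ^^ n) (sc2 k h) = sc2 k ((opr u ^^ n) h)"
  by (induct n) (auto simp: opr_sc2)
lemma opr_dd: "opr u (dd h) = dd (opr u h)"
  by (auto simp: opr_def dd_def fun_eq_iff sL_def sM_def D_scale D_add)
lemma oprp_dd: "(opr u ^^ n) (dd h) = dd ((opr u ^^ n) h)"
  by (induct n) (auto simp: opr_dd)
lemma sc2_sum: "sc2 k (sum f A) = (\<Sum>i\<in>A. sc2 k (f i))"
  by (induct A rule: infinite_finite_induct) (auto simp: sc2_def fun_eq_iff scale_right_distrib)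
lemma dd_sum: "dd (sum f A) = (\<Sum>i\<in>A. dd (f i))"
  by (induct A rule: infinite_finite_induct) (auto simp: dd_def fun_eq_iff D_add)
lemma sc2_cst2: "cst2 (scale k c) = sc2 k (cst2 c)"
  by (auto simp: sc2_def cst2_def fun_eq_iff)
lemma dd_cst2: "cst2 (D c) = dd (cst2 c)"
  by (auto simp: dd_def cst2_def fun_eq_iff)
lemma fin2_opr: "fin2 h \<Longrightarrow> fin2 (opr u h)"
proof -
  assume "fin2 h"
  then obtain N where N: "\<forall>a b. h a b \<noteq> 0 \<longrightarrow> a + b < N" by (auto simp: fin2_def)
  show ?thesis unfolding fin2_def
  proof (intro exI allI impI)
    fix a b assume "opr u h a b \<noteq> 0"
    then have "(a \<noteq> 0 \<and> h (a-1) b \<noteq> 0) \<or> (b \<noteq> 0 \<and> h a (b-1) \<noteq> 0) \<or> h a b \<noteq> 0"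
      by (auto simp: opr_def sL_def sM_def split: if_splits)
    then show "a + b < Suc N" using N[rule_format, of "a-1" b] N[rule_format, of a "b-1"] N[rule_format, of a b]
      by auto
  qed
qed
lemma fin2_oprp: "fin2 h \<Longrightarrow> fin2 ((opr u ^^ n) h)"
  by (induct n) (auto simp: fin2_opr)
lemma fin2_sum: "(\<And>i. i \<in> A \<Longrightarrow> fin2 (f i)) \<Longrightarrow> fin2 (sum f A)"
  by (induct A rule: infinite_finite_induct) (auto intro: fin2_add)
lemma fin2_sc2: "fin2 h \<Longrightarrow> fin2 (sc2 k h)"
  unfolding fin2_def sc2_def by (metis scale_zero_right)
lemma fin2_dd: "fin2 h \<Longrightarrow> fin2 (dd h)"
  unfolding fin2_def dd_def by (metis D_zero)

definition bd :: "(nat \<Rightarrow> nat \<Rightarrow> 'r) \<Rightarrow> nat" where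
  "bd h = (SOME N. \<forall>a b. h a b \<noteq> 0 \<longrightarrow> a + b < N)"
definition sbst :: "complex \<times> complex \<times> complex \<Rightarrow> complex \<times> complex \<times> complex \<Rightarrow> (nat \<Rightarrow> nat \<Rightarrow> 'r) \<Rightarrow> nat \<Rightarrow> nat \<Rightarrow> 'r" where
  "sbst u v h = (\<Sum>a<bd h. \<Sum>b<bd h. (opr u ^^ a) ((opr v ^^ b) (cst2 (h a b))))"

lemma box_sum:
  fixes T :: "nat \<Rightarrow> nat \<Rightarrow> 'b::comm_monoid_add"
  assumes "\<forall>a b. h a b \<noteq> 0 \<longrightarrow> a < Na \<and> b < Nb" and "\<And>a b. h a b = 0 \<Longrightarrow> T a b = 0"
  shows "(\<Sum>a<Na. \<Sum>b<Nb. T a b) = (\<Sum>(a,b)\<in>{(a,b). h a b \<noteq> 0}. T a b)"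
proof -
  have "(\<Sum>a<Na. \<Sum>b<Nb. T a b) = (\<Sum>(a,b)\<in>{..<Na} \<times> {..<Nb}. T a b)"
    by (rule sum.cartesian_product)
  also have "\<dots> = (\<Sum>(a,b)\<in>{(a,b). h a b \<noteq> 0}. T a b)"
    by (rule sum.mono_neutral_right) (use assms in auto)
  finally show ?thesis .
qed

lemma sbst_eq:
  assumes "\<forall>a b. h a b \<noteq> 0 \<longrightarrow> a < Na \<and> b < Nb"
  shows "sbst u v h = (\<Sum>a<Na. \<Sum>b<Nb. (opr u ^^ a) ((opr v ^^ b) (cst2 (h a b))))"
proof -
  have ex: "\<exists>N. \<forall>a b. h a b \<noteq> 0 \<longrightarrow> a + b < N"
    by (rule exI[of _ "Na + Nb"]) (use assms in fastforce)
  have b: "\<forall>a b. h a b \<noteq> 0 \<longrightarrow> a + b < bd h"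
    unfolding bd_def by (rule someI_ex[OF ex])
  have b2: "\<forall>a b. h a b \<noteq> 0 \<longrightarrow> a < bd h \<and> b < bd h" using b by fastforce
  show ?thesis unfolding sbst_def
    by (subst box_sum[OF b2], simp, subst box_sum[OF assms], simp_all)
qed

lemma fin2_boundE:
  assumes "fin2 h" obtains N where "\<forall>a b. h a b \<noteq> 0 \<longrightarrow> a < N \<and> b < N"
proof -
  obtain N where N: "\<forall>a b. h a b \<noteq> 0 \<longrightarrow> a + b < N" using assms by (auto simp: fin2_def)
  have "\<forall>a b. h a b \<noteq> 0 \<longrightarrow> a < N \<and> b < N"
  proof (intro allI impI)
    fix a b assume "h a b \<noteq> 0" then have "a + b < N" using N by auto
    then show "a < N \<and> b < N" by auto
  qed
  then show ?thesis using that by blast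
qed

lemma sbst_add: "fin2 h1 \<Longrightarrow> fin2 h2 \<Longrightarrow> sbst u v (h1 + h2) = sbst u v h1 + sbst u v h2"
proof -
  assume "fin2 h1" "fin2 h2"
  then obtain N1 N2 where N1: "\<forall>a b. h1 a b \<noteq> 0 \<longrightarrow> a < N1 \<and> b < N1"
    and N2: "\<forall>a b. h2 a b \<noteq> 0 \<longrightarrow> a < N2 \<and> b < N2" by (metis fin2_boundE)
  let ?N = "max N1 N2"
  have B1: "\<forall>a b. h1 a b \<noteq> 0 \<longrightarrow> a < ?N \<and> b < ?N" using N1 by (auto simp: less_max_iff_disj)
  have B2: "\<forall>a b. h2 a b \<noteq> 0 \<longrightarrow> a < ?N \<and> b < ?N" using N2 by (auto simp: less_max_iff_disj)
  have B: "\<forall>a b. (h1 + h2) a b \<noteq> 0 \<longrightarrow> a < ?N \<and> b < ?N"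
    using B1 B2 by (metis add.right_neutral plus_fun_apply)
  show ?thesis
    by (simp add: sbst_eq[OF B] sbst_eq[OF B1] sbst_eq[OF B2] cst2_add oprp_add sum.distrib)
qed

lemma sbst_cst2[simp]: "sbst u v (cst2 c) = cst2 c"
proof -
  have B: "\<forall>a b. cst2 c a b \<noteq> 0 \<longrightarrow> a < 1 \<and> b < 1" by (auto simp: cst2_def)
  show ?thesis by (simp add: sbst_eq[OF B] cst2_def)
qed

lemma sbst_sc2: "fin2 h \<Longrightarrow> sbst u v (sc2 k h) = sc2 k (sbst u v h)"
proof -
  assume "fin2 h"
  then obtain N where N: "\<forall>a b. h a b \<noteq> 0 \<longrightarrow> a < N \<and> b < N" by (metis fin2_boundE)
  have B: "\<forall>a b. sc2 k h a b \<noteq> 0 \<longrightarrow> a < N \<and> b < N" using N unfolding sc2_def by (metis scale_zero_right)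
  have e: "cst2 (sc2 k h a b) = sc2 k (cst2 (h a b))" for a b by (simp add: sc2_def sc2_cst2)
  show ?thesis
    by (simp add: sbst_eq[OF B] sbst_eq[OF N] e oprp_sc2 sc2_sum)
qed

lemma sbst_dd: "fin2 h \<Longrightarrow> sbst u v (dd h) = dd (sbst u v h)"
proof -
  assume "fin2 h"
  then obtain N where N: "\<forall>a b. h a b \<noteq> 0 \<longrightarrow> a < N \<and> b < N" by (metis fin2_boundE)
  have B: "\<forall>a b. dd h a b \<noteq> 0 \<longrightarrow> a < N \<and> b < N" using N unfolding dd_def by (metis D_zero)
  have e: "cst2 (dd h a b) = dd (cst2 (h a b))" for a b by (simp add: dd_def dd_cst2)
  show ?thesis
    by (simp add: sbst_eq[OF B] sbst_eq[OF N] e oprp_dd dd_sum)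
qed

lemma sbst_sL: "fin2 h \<Longrightarrow> sbst u v (sL h) = opr u (sbst u v h)"
proof -
  assume "fin2 h"
  then obtain N where N: "\<forall>a b. h a b \<noteq> 0 \<longrightarrow> a < N \<and> b < N" by (metis fin2_boundE)
  have B: "\<forall>a b. sL h a b \<noteq> 0 \<longrightarrow> a < Suc N \<and> b < N" using N
    by (auto simp: sL_def split: if_splits) (metis Suc_pred not_less_eq)
  show ?thesis
    apply (simp only: sbst_eq[OF B] sbst_eq[OF N])
    apply (subst sum.lessThan_Suc_shift)
    apply (simp add: opr_sum sL_def)
    done
qed

lemma sbst_sM: "fin2 h \<Longrightarrow> sbst u v (sM h) = opr v (sbst u v h)"
proof -
  assume "fin2 h"
  then obtain N where N: "\<forall>a b. h a b \<noteq> 0 \<longrightarrow> a < N \<and> b < N" by (metis fin2_boundE)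
  have B: "\<forall>a b. sM h a b \<noteq> 0 \<longrightarrow> a < N \<and> b < Suc N" using N
    by (auto simp: sM_def split: if_splits) (metis Suc_pred not_less_eq)
  have c: "(opr u ^^ a) (opr w k) = opr w ((opr u ^^ a) k)" for a w k
    by (simp add: oprp_comm)
  show ?thesis
    apply (simp only: sbst_eq[OF B] sbst_eq[OF N])
    apply (simp only: sum.lessThan_Suc_shift)
    apply (simp add: opr_sum sM_def c)
    done
qed

lemma fin2_sbst: "fin2 h \<Longrightarrow> fin2 (sbst u v h)"
  unfolding sbst_def by (intro fin2_sum fin2_oprp fin2_cst2)

end

context cfa begin

lemma opr_split: "opr w h = sc2 (fst w) (sL h) + sc2 (fst (snd w)) (sM h) + sc2 (snd (snd w)) (dd h)"
  by (simp add: fun_eq_iff opr_def sc2_def dd_def)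

lemma sc2_add: "sc2 k (f + g) = sc2 k f + sc2 k g"
  by (simp add: fun_eq_iff sc2_def scale_right_distrib)
lemma dd_add: "dd (f + g) = dd f + dd g"
  by (simp add: fun_eq_iff dd_def D_add)

lemma sbst_opr:
  assumes "fin2 h"
  shows "sbst u v (opr w h) = opr (compo w u v) (sbst u v h)"
proof -
  have f: "fin2 (sL h)" "fin2 (sM h)" "fin2 (dd h)" using assms by (auto intro: fin2_sL fin2_sM fin2_dd)
  let ?K = "sbst u v h"
  have "sbst u v (opr w h) = sc2 (fst w) (opr u ?K) + sc2 (fst (snd w)) (opr v ?K) + sc2 (snd (snd w)) (dd ?K)"
    by (simp add: opr_split sbst_add f fin2_sc2 fin2_add sbst_sc2 sbst_sL sbst_sM sbst_dd assms)
  also have "\<dots> = opr (compo w u v) ?K"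
    by (simp add: fun_eq_iff opr_def sc2_def dd_def compo_def scale_right_distrib scale_left_distrib D_add D_scale add_ac)
  finally show ?thesis .
qed

lemma sbst_comp:
  assumes "fin2 h"
  shows "sbst u v (sbst u' v' h) = sbst (compo u' u v) (compo v' u v) h"
proof (rule U2[where A = "opr (compo u' u v)" and B = "opr (compo v' u v)", OF _ _ _ _ _ _ _ assms])
  fix f g :: "nat \<Rightarrow> nat \<Rightarrow> 'r" assume "fin2 f" "fin2 g"
  then show "sbst u v (sbst u' v' (f + g)) = sbst u v (sbst u' v' f) + sbst u v (sbst u' v' g)"
    by (simp add: sbst_add fin2_sbst)
next
  fix f g :: "nat \<Rightarrow> nat \<Rightarrow> 'r" assume "fin2 f" "fin2 g"
  then show "sbst (compo u' u v) (compo v' u v) (f + g) = sbst (compo u' u v) (compo v' u v) f + sbst (compo u' u v) (compo v' u v) g"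
    by (simp add: sbst_add)
next
  fix f :: "nat \<Rightarrow> nat \<Rightarrow> 'r" assume "fin2 f"
  then show "sbst u v (sbst u' v' (sL f)) = opr (compo u' u v) (sbst u v (sbst u' v' f))"
    by (simp add: sbst_sL sbst_opr fin2_sbst)
next
  fix f :: "nat \<Rightarrow> nat \<Rightarrow> 'r" assume "fin2 f"
  then show "sbst u v (sbst u' v' (sM f)) = opr (compo v' u v) (sbst u v (sbst u' v' f))"
    by (simp add: sbst_sM sbst_opr fin2_sbst)
qed (simp_all add: sbst_sL sbst_sM)

lemma opr_100: "opr (1,0,0) f = sL f" by (simp add: opr_def fun_eq_iff)
lemma opr_010: "opr (0,1,0) f = sM f" by (simp add: opr_def fun_eq_iff)

lemma sbst_id: "fin2 h \<Longrightarrow> sbst (1,0,0) (0,1,0) h = id h"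
  by (rule U2[where A = "opr (1,0,0)" and B = "opr (0,1,0)"])
     (simp_all only: sbst_add sbst_sL sbst_sM opr_100 opr_010 id_apply sbst_cst2)

lemma sbst_id': "fin2 h \<Longrightarrow> sbst (1,0,0) (0,1,0) h = h"
  using sbst_id by simp

lemma swp_add: "swp (f + g) = swp f + swp g" by (simp add: swp_def fun_eq_iff)
lemma swp_sL: "swp (sL f) = sM (swp f)" by (simp add: swp_def fun_eq_iff sL_def sM_def)
lemma swp_sM: "swp (sM f) = sL (swp f)" by (simp add: swp_def fun_eq_iff sL_def sM_def)
lemma swp_cst2: "swp (cst2 c) = cst2 c" by (auto simp add: swp_def fun_eq_iff cst2_def)

lemma swp_sbst: "fin2 h \<Longrightarrow> swp h = sbst (0,1,0) (1,0,0) h"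
  by (rule U2[where A = "opr (0,1,0)" and B = "opr (1,0,0)"])
     (simp_all only: sbst_add sbst_sL sbst_sM opr_100 opr_010 swp_add swp_sL swp_sM swp_cst2 sbst_cst2)

lemma sbst_emb: "fin1 f \<Longrightarrow> sbst u v (emb f) = sbst u v' (emb f)"
  by (rule U1[where A = "opr u"])
     (simp_all only: emb_add sbst_add fin2_emb emb_shiftL sbst_sL emb_cst1 sbst_cst2)

end

context cfa begin

abbreviation S :: "(nat \<Rightarrow> 'r) \<Rightarrow> nat \<Rightarrow> 'r" where "S \<equiv> subst_neg scale D"

lemma S_alt:
  assumes "\<forall>n. f n \<noteq> 0 \<longrightarrow> n < N"
  shows "S f k = (\<Sum>n<N. scale ((-1) ^ n * of_nat (n choose k)) ((D^^(n-k)) (f n)))"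
  unfolding subst_neg_def
proof (rule sum.mono_neutral_left)
  show "finite {..<N}" by simp
  show "{n. k \<le> n \<and> f n \<noteq> 0} \<subseteq> {..<N}" using assms by auto
  show "\<forall>i\<in>{..<N} - {n. k \<le> n \<and> f n \<noteq> 0}. scale ((-1) ^ i * of_nat (i choose k)) ((D ^^ (i - k)) (f i)) = 0"
  proof
    fix i assume "i \<in> {..<N} - {n. k \<le> n \<and> f n \<noteq> 0}"
    then have "i < k \<or> f i = 0" by auto
    then show "scale ((-1) ^ i * of_nat (i choose k)) ((D ^^ (i - k)) (f i)) = 0"
      by (auto simp: binomial_eq_0)
  qed
qed

lemma S_0[simp]: "S 0 = 0"
  by (simp add: subst_neg_def fun_eq_iff)

lemma fin1_S: "fin1 f \<Longrightarrow> fin1 (S f)"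
proof -
  assume "fin1 f"
  then obtain N where N: "\<forall>n. f n \<noteq> 0 \<longrightarrow> n < N" by (auto simp: fin1_def)
  have "S f k = 0" if "N \<le> k" for k
  proof -
    have "{n. k \<le> n \<and> f n \<noteq> 0} = {}" using N that by fastforce
    then show ?thesis by (simp add: subst_neg_def)
  qed
  then show ?thesis unfolding fin1_def by (metis not_le)
qed

lemma S_add: "fin1 f \<Longrightarrow> fin1 g \<Longrightarrow> S (f + g) = S f + S g"
proof -
  assume "fin1 f" "fin1 g"
  then obtain N1 N2 where N1: "\<forall>n. f n \<noteq> 0 \<longrightarrow> n < N1" and N2: "\<forall>n. g n \<noteq> 0 \<longrightarrow> n < N2"
    by (auto simp: fin1_def)
  let ?N = "max N1 N2"
  have B1: "\<forall>n. f n \<noteq> 0 \<longrightarrow> n < ?N" using N1 by (auto simp: less_max_iff_disj)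
  have B2: "\<forall>n. g n \<noteq> 0 \<longrightarrow> n < ?N" using N2 by (auto simp: less_max_iff_disj)
  have B: "\<forall>n. (f + g) n \<noteq> 0 \<longrightarrow> n < ?N" using B1 B2 by (metis add.right_neutral plus_fun_apply)
  show ?thesis
    by (simp add: fun_eq_iff S_alt[OF B] S_alt[OF B1] S_alt[OF B2] Dp_add scale_right_distrib sum.distrib)
qed

lemma S_sc: "fin1 f \<Longrightarrow> S (\<lambda>n. scale c (f n)) = (\<lambda>k. scale c (S f k))"
proof -
  assume "fin1 f"
  then obtain N where N: "\<forall>n. f n \<noteq> 0 \<longrightarrow> n < N" by (auto simp: fin1_def)
  have B: "\<forall>n. scale c (f n) \<noteq> 0 \<longrightarrow> n < N" using N by (metis scale_zero_right)
  show ?thesis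
    by (simp add: fun_eq_iff S_alt[OF B] S_alt[OF N] Dp_scale scale_sum_right mult.commute)
qed

lemma S_Dp: "fin1 f \<Longrightarrow> S (\<lambda>n. D (f n)) = (\<lambda>k. D (S f k))"
proof -
  assume "fin1 f"
  then obtain N where N: "\<forall>n. f n \<noteq> 0 \<longrightarrow> n < N" by (auto simp: fin1_def)
  have B: "\<forall>n. D (f n) \<noteq> 0 \<longrightarrow> n < N" using N by (metis D_zero)
  show ?thesis
    by (simp add: fun_eq_iff S_alt[OF B] S_alt[OF N] Dp_D D_sum D_scale)
qed

lemma S_cst1: "S (cst1 c) = cst1 c"
proof -
  have B: "\<forall>n. cst1 c n \<noteq> 0 \<longrightarrow> n < 1" by (auto simp: cst1_def)
  show ?thesis by (auto simp: fun_eq_iff S_alt[OF B] cst1_def binomial_eq_0)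
qed

lemma S_Lm: "fin1 f \<Longrightarrow> S (shiftL f) = (\<lambda>k. - shiftL (S f) k - D (S f k))"
proof -
  assume "fin1 f"
  then obtain N where N: "\<forall>n. f n \<noteq> 0 \<longrightarrow> n < N" by (auto simp: fin1_def)
  have B: "\<forall>n. shiftL f n \<noteq> 0 \<longrightarrow> n < Suc N" using N
    by (auto simp: shiftL_def split: if_splits)
  have main: "S (shiftL f) k = - shiftL (S f) k - D (S f k)" for k
  proof -
    have "S (shiftL f) k = (\<Sum>n<N. scale ((-1) ^ Suc n * of_nat (Suc n choose k)) ((D^^(Suc n-k)) (f n)))"
      by (simp add: S_alt[OF B] sum.lessThan_Suc_shift shiftL_def del: sum.lessThan_Suc)
    also have "\<dots> = - shiftL (S f) k - D (S f k)"
    proof (cases k)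
      case 0
      have t: "scale ((-1) ^ Suc n * of_nat (Suc n choose k)) ((D^^(Suc n-k)) (f n))
          = - D (scale ((-1) ^ n * of_nat (n choose k)) ((D^^(n-k)) (f n)))" for n
        using 0 by (simp add: D_scale)
      show ?thesis using 0
        by (simp add: t S_alt[OF N] D_sum shiftL_def sum_negf D_scale)
    next
      case (Suc k')
      have t: "scale ((-1) ^ Suc n * of_nat (Suc n choose k)) ((D^^(Suc n-k)) (f n))
          = - scale ((-1) ^ n * of_nat (n choose k')) ((D^^(n-k')) (f n))
            - D (scale ((-1) ^ n * of_nat (n choose k)) ((D^^(n-k)) (f n)))" for n
      proof (cases "k' < n")
        case True
        have e: "n - k' = Suc (n - Suc k')" using True by simp
        show ?thesis using Suc
          by (simp add: e D_scale scale_left_distrib algebra_simps)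
      next
        case False
        then have c1: "n choose Suc k' = 0" by simp
        have c2: "Suc n choose Suc k' = n choose k'" using c1 by simp
        show ?thesis using Suc False by (simp add: c1 c2 D_scale del: binomial_Suc_Suc)
      qed
      have "(\<Sum>n<N. scale ((-1) ^ Suc n * of_nat (Suc n choose k)) ((D^^(Suc n-k)) (f n)))
          = (\<Sum>n<N. - scale ((-1) ^ n * of_nat (n choose k')) ((D^^(n-k')) (f n))
            - D (scale ((-1) ^ n * of_nat (n choose k)) ((D^^(n-k)) (f n))))"
        by (rule sum.cong[OF refl t])
      also have "\<dots> = - (\<Sum>n<N. scale ((-1) ^ n * of_nat (n choose k')) ((D^^(n-k')) (f n)))
            - D (\<Sum>n<N. scale ((-1) ^ n * of_nat (n choose k)) ((D^^(n-k)) (f n)))"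
        by (simp only: sum_subtractf sum_negf D_sum)
      also have "\<dots> = - shiftL (S f) k - D (S f k)"
        using Suc by (simp only: S_alt[OF N] shiftL_def) simp
      finally show ?thesis .
    qed
    finally show ?thesis .
  qed
  then show ?thesis by (simp add: fun_eq_iff)
qed

end

context cfa begin

lemma fin1_mono: "fin1 f \<Longrightarrow> (\<And>n. f n = 0 \<Longrightarrow> g n = 0) \<Longrightarrow> fin1 g"
proof -
  assume f: "fin1 f" and h: "\<And>n. f n = 0 \<Longrightarrow> g n = 0"
  then obtain N where N: "\<forall>n. f n \<noteq> 0 \<longrightarrow> n < N" by (auto simp: fin1_def)
  show ?thesis unfolding fin1_def
  proof (intro exI allI impI)
    fix n assume "g n \<noteq> 0" then have "f n \<noteq> 0" using h by blast
    then show "n < N" using N by blast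
  qed
qed
lemma fin1_Dp: "fin1 f \<Longrightarrow> fin1 (\<lambda>n. D (f n))"
  by (erule fin1_mono) simp
lemma fin1_sc: "fin1 f \<Longrightarrow> fin1 (\<lambda>n. scale c (f n))"
  by (erule fin1_mono) simp
lemma fin1_neg: "fin1 f \<Longrightarrow> fin1 (- (f::nat \<Rightarrow> 'r))"
  by (erule fin1_mono) simp
lemma fin1_diff: "fin1 f \<Longrightarrow> fin1 g \<Longrightarrow> fin1 (f - (g::nat \<Rightarrow> 'r))"
  using fin1_add[OF _ fin1_neg, of f g] by (simp only: diff_conv_add_uminus)

lemma S_neg: "fin1 f \<Longrightarrow> S (- f) = - S f"
proof -
  assume f: "fin1 f"
  have e: "(- f) = (\<lambda>n. scale (-1) (f n))" by (simp add: fun_eq_iff)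
  have "S (- f) = (\<lambda>k. scale (-1) (S f k))" by (subst e, rule S_sc[OF f])
  then show ?thesis by (simp add: fun_eq_iff)
qed
lemma S_diff: "fin1 f \<Longrightarrow> fin1 g \<Longrightarrow> S (f - g) = S f - S g"
  by (simp only: diff_conv_add_uminus S_add fin1_neg S_neg)

definition colS :: "(nat \<Rightarrow> nat \<Rightarrow> 'r) \<Rightarrow> nat \<Rightarrow> nat \<Rightarrow> 'r" where
  "colS H = (\<lambda>p q. S (\<lambda>a. H a q) p)"

lemma fin1_col: "fin2 H \<Longrightarrow> fin1 (\<lambda>a. H a q)"
proof -
  assume "fin2 H"
  then obtain N where N: "\<forall>a b. H a b \<noteq> 0 \<longrightarrow> a < N \<and> b < N" by (rule fin2_boundE)
  then show ?thesis unfolding fin1_def by blast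
qed
lemma fin1_row: "fin2 H \<Longrightarrow> fin1 (H p)"
proof -
  assume "fin2 H"
  then obtain N where N: "\<forall>a b. H a b \<noteq> 0 \<longrightarrow> a < N \<and> b < N" by (rule fin2_boundE)
  then show ?thesis unfolding fin1_def by blast
qed

lemma col_add: "(\<lambda>a. (f + g) a q) = (\<lambda>a. f a q) + (\<lambda>a. (g::nat\<Rightarrow>nat\<Rightarrow>'r) a q)"
  by (simp add: fun_eq_iff)

lemma colS_add: "fin2 f \<Longrightarrow> fin2 g \<Longrightarrow> colS (f + g) = colS f + colS g"
proof -
  assume f: "fin2 f" and g: "fin2 g"
  have "colS (f+g) p q = colS f p q + colS g p q" for p q
    unfolding colS_def col_add S_add[OF fin1_col[OF f] fin1_col[OF g]] by (rule plus_fun_apply)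
  then show ?thesis by (simp add: fun_eq_iff)
qed

lemma colS_cst2: "colS (cst2 c) = cst2 c"
proof -
  have "(\<lambda>a. cst2 c a q) = (if q = 0 then cst1 c else 0)" for q
    by (auto simp: fun_eq_iff cst2_def cst1_def)
  then show ?thesis
    by (auto simp: colS_def fun_eq_iff S_cst1 cst1_def cst2_def)
qed

lemma colS_sL: "fin2 f \<Longrightarrow> colS (sL f) = opr (-1,0,-1) (colS f)"
proof -
  assume f: "fin2 f"
  have c: "(\<lambda>a. sL f a q) = shiftL (\<lambda>a. f a q)" for q
    by (simp add: fun_eq_iff sL_def shiftL_def)
  have "colS (sL f) p q = opr (-1,0,-1) (colS f) p q" for p q
  proof -
    have "colS (sL f) p q = S (shiftL (\<lambda>a. f a q)) p" by (simp only: colS_def c)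
    also have "\<dots> = - shiftL (S (\<lambda>a. f a q)) p - D (S (\<lambda>a. f a q) p)"
      by (simp only: S_Lm[OF fin1_col[OF f]])
    also have "\<dots> = opr (-1,0,-1) (colS f) p q"
      by (simp add: opr_def colS_def sL_def sM_def shiftL_def)
    finally show ?thesis .
  qed
  then show ?thesis by (simp add: fun_eq_iff)
qed

lemma colS_sM: "fin2 f \<Longrightarrow> colS (sM f) = opr (0,1,0) (colS f)"
proof -
  assume f: "fin2 f"
  have c: "(\<lambda>a. sM f a q) = (if q = 0 then 0 else (\<lambda>a. f a (q - 1)))" for q
    by (simp add: fun_eq_iff sM_def)
  have "colS (sM f) p q = opr (0,1,0) (colS f) p q" for p q
  proof -
    have "colS (sM f) p q = (if q = 0 then S 0 p else S (\<lambda>a. f a (q - 1)) p)" by (simp only: colS_def c) simp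
    then show ?thesis by (simp add: opr_010 colS_def sM_def)
  qed
  then show ?thesis by (simp add: fun_eq_iff)
qed

lemma colS_sbst: "fin2 H \<Longrightarrow> colS H = sbst (-1,0,-1) (0,1,0) H"
  by (rule U2[where A = "opr (-1,0,-1)" and B = "opr (0,1,0)"])
     (simp_all only: sbst_add sbst_sL sbst_sM colS_add colS_sL colS_sM colS_cst2 sbst_cst2)

lemma colS_emb: "fin1 f \<Longrightarrow> colS (emb f) = emb (S f)"
proof -
  have "(\<lambda>a. emb f a q) = (if q = 0 then f else 0)" for q by (simp add: fun_eq_iff emb_def)
  then show ?thesis by (simp add: colS_def fun_eq_iff emb_def)
qed

lemma emb_S: "fin1 f \<Longrightarrow> emb (S f) = sbst (-1,0,-1) (0,1,0) (emb f)"
  by (simp add: colS_emb[symmetric] colS_sbst fin2_emb)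

lemma emb_inj: "emb f = emb g \<Longrightarrow> f = g"
  by (metis emb_def ext)

lemma SS: "fin1 f \<Longrightarrow> S (S f) = f"
proof -
  assume f: "fin1 f"
  have "emb (S (S f)) = sbst (-1,0,-1) (0,1,0) (sbst (-1,0,-1) (0,1,0) (emb f))"
    by (simp add: emb_S f fin1_S)
  also have "\<dots> = sbst (1,0,0) (0,1,0) (emb f)"
    by (simp add: sbst_comp fin2_emb f compo_def)
  also have "\<dots> = emb f" by (simp add: sbst_id' fin2_emb f)
  finally show ?thesis by (rule emb_inj)
qed

lemma colS_swp: "(\<lambda>p q. S (H p) q) = swp (colS (swp H))"
  by (simp add: colS_def swp_def fun_eq_iff)

lemma fin2_colS: "fin2 H \<Longrightarrow> fin2 (colS H)"
  by (simp add: colS_sbst fin2_sbst)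

lemma rowS_sbst: "fin2 H \<Longrightarrow> (\<lambda>p q. S (H p) q) = sbst (1,0,0) (0,-1,-1) H"
proof -
  assume H: "fin2 H"
  have "(\<lambda>p q. S (H p) q) = sbst (0,1,0) (1,0,0) (sbst (-1,0,-1) (0,1,0) (sbst (0,1,0) (1,0,0) H))"
    by (simp add: colS_swp swp_sbst colS_sbst fin2_swp H fin2_colS fin2_sbst)
  also have "\<dots> = sbst (1,0,0) (0,-1,-1) H"
    by (simp add: sbst_comp H fin2_sbst compo_def)
  finally show ?thesis .
qed

end

context cfa begin

definition lprod :: "('r \<Rightarrow> 'r \<Rightarrow> nat \<Rightarrow> 'r) \<Rightarrow> bool" where
  "lprod g \<longleftrightarrow> (\<forall>x y. fin1 (g x y)) \<and> (\<forall>x u v. g x (u + v) = g x u + g x v)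
     \<and> (\<forall>x u c. g x (scale c u) = (\<lambda>n. scale c (g x u n)))
     \<and> (\<forall>u v z. g (u + v) z = g u z + g v z) \<and> (\<forall>u c z. g (scale c u) z = (\<lambda>n. scale c (g u z n)))"
definition ses1 :: "('r \<Rightarrow> 'r \<Rightarrow> nat \<Rightarrow> 'r) \<Rightarrow> bool" where
  "ses1 g \<longleftrightarrow> (\<forall>u z. g (D u) z = - shiftL (g u z))"
definition ses2 :: "('r \<Rightarrow> 'r \<Rightarrow> nat \<Rightarrow> 'r) \<Rightarrow> bool" where
  "ses2 g \<longleftrightarrow> (\<forall>x u. g x (D u) = (\<lambda>n. D (g x u n)) + shiftL (g x u))"

lemma lprod_fin: "lprod g \<Longrightarrow> fin1 (g x y)" by (simp add: lprod_def)
lemma lprod_add2: "lprod g \<Longrightarrow> g x (u + v) = g x u + g x v" by (simp add: lprod_def)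
lemma lprod_add1: "lprod g \<Longrightarrow> g (u + v) z = g u z + g v z" by (simp add: lprod_def)
lemma lprod_sc2: "lprod g \<Longrightarrow> g x (scale c u) = (\<lambda>n. scale c (g x u n))" by (simp add: lprod_def)
lemma lprod_sc1: "lprod g \<Longrightarrow> g (scale c u) z = (\<lambda>n. scale c (g u z n))" by (simp add: lprod_def)
lemma lprod_02: "lprod g \<Longrightarrow> g x 0 = 0"
  using lprod_add2[of g x 0 0] by simp
lemma lprod_01: "lprod g \<Longrightarrow> g 0 z = 0"
  using lprod_add1[of g 0 0] by simp
lemma lprod_neg2: "lprod g \<Longrightarrow> g x (- u) = - g x u"
proof -
  assume g: "lprod g"
  have "g x u + g x (-u) = 0" using lprod_add2[OF g, of x u "-u"] lprod_02[OF g, of x] by simp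
  then show ?thesis by (metis minus_unique)
qed
lemma lprod_neg1: "lprod g \<Longrightarrow> g (- u) z = - g u z"
proof -
  assume g: "lprod g"
  have "g u z + g (-u) z = 0" using lprod_add1[OF g, of u "-u" z] lprod_01[OF g, of z] by simp
  then show ?thesis by (metis minus_unique)
qed
lemma lprod_diff2: "lprod g \<Longrightarrow> g x (u - v) = g x u - g x v"
  by (simp only: diff_conv_add_uminus lprod_add2 lprod_neg2)
lemma lprod_diff1: "lprod g \<Longrightarrow> g (u - v) z = g u z - g v z"
  by (simp only: diff_conv_add_uminus lprod_add1 lprod_neg1)

lemma fin2_gen:
  assumes w: "fin1 w" and G: "\<And>u. fin1 (G u)" and G0: "G 0 = 0"
  shows "fin2 (\<lambda>a b. G (w b) a)"
proof -
  obtain N where N: "\<forall>n. w n \<noteq> 0 \<longrightarrow> n < N" using w by (auto simp: fin1_def)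
  have "\<forall>b. \<exists>M. \<forall>a. G (w b) a \<noteq> 0 \<longrightarrow> a < M" using G by (simp add: fin1_def)
  then obtain F where F: "\<forall>b a. G (w b) a \<noteq> 0 \<longrightarrow> a < F b" by metis
  show ?thesis unfolding fin2_def
  proof (intro exI allI impI)
    fix a b assume ab: "G (w b) a \<noteq> 0"
    then have "w b \<noteq> 0" using G0 by auto
    then have b: "b < N" using N by blast
    have "a < F b" using F ab by blast
    also have "F b \<le> (\<Sum>i<N. F i)" using b by (intro member_le_sum) auto
    finally show "a + b < N + (\<Sum>i<N. F i)" using b by linarith
  qed
qed

definition Xg :: "('r \<Rightarrow> 'r \<Rightarrow> nat \<Rightarrow> 'r) \<Rightarrow> 'r \<Rightarrow> (nat \<Rightarrow> 'r) \<Rightarrow> nat \<Rightarrow> nat \<Rightarrow> 'r" where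
  "Xg g x f = (\<lambda>a b. g x (f b) a)"
definition Yg :: "('r \<Rightarrow> 'r \<Rightarrow> nat \<Rightarrow> 'r) \<Rightarrow> 'r \<Rightarrow> (nat \<Rightarrow> 'r) \<Rightarrow> nat \<Rightarrow> nat \<Rightarrow> 'r" where
  "Yg g z f = (\<lambda>a b. g (f b) z a)"
definition psf :: "('r \<Rightarrow> 'r \<Rightarrow> nat \<Rightarrow> 'r) \<Rightarrow> (nat \<Rightarrow> 'r) \<Rightarrow> 'r \<Rightarrow> nat \<Rightarrow> nat \<Rightarrow> 'r" where
  "psf g d z = (\<lambda>i j. plus_subst scale g d z i j)"

lemma fin2_Xg: "lprod g \<Longrightarrow> fin1 f \<Longrightarrow> fin2 (Xg g x f)"
  unfolding Xg_def by (rule fin2_gen) (auto simp: lprod_fin lprod_02)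
lemma fin2_Yg: "lprod g \<Longrightarrow> fin1 f \<Longrightarrow> fin2 (Yg g z f)"
  unfolding Yg_def by (rule fin2_gen[where G = "\<lambda>u. g u z"]) (auto simp: lprod_fin lprod_01)

lemma Xg_add: "lprod g \<Longrightarrow> Xg g x (f1 + f2) = Xg g x f1 + Xg g x f2"
  by (simp add: Xg_def fun_eq_iff lprod_add2)
lemma Yg_add: "lprod g \<Longrightarrow> Yg g z (f1 + f2) = Yg g z f1 + Yg g z f2"
  by (simp add: Yg_def fun_eq_iff lprod_add1)
lemma Xg_cst1: "lprod g \<Longrightarrow> Xg g x (cst1 c) = emb (g x c)"
  by (simp add: Xg_def fun_eq_iff cst1_def emb_def lprod_02)
lemma Yg_cst1: "lprod g \<Longrightarrow> Yg g z (cst1 c) = emb (g c z)"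
  by (simp add: Yg_def fun_eq_iff cst1_def emb_def lprod_01)
lemma Xg_shiftL: "lprod g \<Longrightarrow> Xg g x (shiftL f) = sM (Xg g x f)"
  by (simp add: Xg_def fun_eq_iff shiftL_def sM_def lprod_02)
lemma Yg_shiftL: "lprod g \<Longrightarrow> Yg g z (shiftL f) = sM (Yg g z f)"
  by (simp add: Yg_def fun_eq_iff shiftL_def sM_def lprod_01)

lemma X_S:
  assumes g: "lprod g" "ses2 g" and f: "fin1 f"
  shows "Xg g x (S f) = sbst (1,0,0) (-1,-1,-1) (Xg g x f)"
proof (rule U1[where A = "opr (-1,-1,-1)", OF _ _ _ _ _ f])
  fix f1 f2 :: "nat \<Rightarrow> 'r" assume "fin1 f1" "fin1 f2"
  then show "Xg g x (S (f1 + f2)) = Xg g x (S f1) + Xg g x (S f2)"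
    by (simp add: S_add Xg_add g)
next
  fix f1 f2 :: "nat \<Rightarrow> 'r" assume "fin1 f1" "fin1 f2"
  then show "sbst (1,0,0) (-1,-1,-1) (Xg g x (f1 + f2)) = sbst (1,0,0) (-1,-1,-1) (Xg g x f1) + sbst (1,0,0) (-1,-1,-1) (Xg g x f2)"
    by (simp add: Xg_add g sbst_add fin2_Xg)
next
  fix c
  have "sbst (1,0,0) (-1,-1,-1) (emb (g x c)) = sbst (1,0,0) (0,1,0) (emb (g x c))"
    by (rule sbst_emb) (simp add: lprod_fin g)
  then show "Xg g x (S (cst1 c)) = sbst (1,0,0) (-1,-1,-1) (Xg g x (cst1 c))"
    by (simp add: S_cst1 Xg_cst1 g sbst_id' fin2_emb lprod_fin)
next
  fix f1 :: "nat \<Rightarrow> 'r" assume f1: "fin1 f1"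
  show "sbst (1,0,0) (-1,-1,-1) (Xg g x (shiftL f1)) = opr (-1,-1,-1) (sbst (1,0,0) (-1,-1,-1) (Xg g x f1))"
    by (simp add: Xg_shiftL g sbst_sM fin2_Xg f1)
next
  fix f1 :: "nat \<Rightarrow> 'r" assume f1: "fin1 f1"
  have s2: "g x (D u) n = D (g x u n) + shiftL (g x u) n" for u n
    using g(2) by (simp add: ses2_def)
  show "Xg g x (S (shiftL f1)) = opr (-1,-1,-1) (Xg g x (S f1))"
    by (auto simp: S_Lm f1 Xg_def fun_eq_iff opr_def sL_def sM_def shiftL_def lprod_diff2 lprod_neg2 g s2 lprod_02)
qed

lemma Y_S:
  assumes g: "lprod g" "ses1 g" and f: "fin1 f"
  shows "Yg g z (S f) = sbst (1,0,0) (1,-1,0) (Yg g z f)"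
proof (rule U1[where A = "opr (1,-1,0)", OF _ _ _ _ _ f])
  fix f1 f2 :: "nat \<Rightarrow> 'r" assume "fin1 f1" "fin1 f2"
  then show "Yg g z (S (f1 + f2)) = Yg g z (S f1) + Yg g z (S f2)"
    by (simp add: S_add Yg_add g)
next
  fix f1 f2 :: "nat \<Rightarrow> 'r" assume "fin1 f1" "fin1 f2"
  then show "sbst (1,0,0) (1,-1,0) (Yg g z (f1 + f2)) = sbst (1,0,0) (1,-1,0) (Yg g z f1) + sbst (1,0,0) (1,-1,0) (Yg g z f2)"
    by (simp add: Yg_add g sbst_add fin2_Yg)
next
  fix c
  have "sbst (1,0,0) (1,-1,0) (emb (g c z)) = sbst (1,0,0) (0,1,0) (emb (g c z))"
    by (rule sbst_emb) (simp add: lprod_fin g)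
  then show "Yg g z (S (cst1 c)) = sbst (1,0,0) (1,-1,0) (Yg g z (cst1 c))"
    by (simp add: S_cst1 Yg_cst1 g sbst_id' fin2_emb lprod_fin)
next
  fix f1 :: "nat \<Rightarrow> 'r" assume f1: "fin1 f1"
  show "sbst (1,0,0) (1,-1,0) (Yg g z (shiftL f1)) = opr (1,-1,0) (sbst (1,0,0) (1,-1,0) (Yg g z f1))"
    by (simp add: Yg_shiftL g sbst_sM fin2_Yg f1)
next
  fix f1 :: "nat \<Rightarrow> 'r" assume f1: "fin1 f1"
  have s1: "g (D u) z n = - shiftL (g u z) n" for u n
    using g(2) by (simp add: ses1_def)
  show "Yg g z (S (shiftL f1)) = opr (1,-1,0) (Yg g z (S f1))"
    by (auto simp: S_Lm f1 Yg_def fun_eq_iff opr_def sL_def sM_def shiftL_def lprod_diff1 lprod_neg1 g s1 lprod_01)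
qed

end

context cfa begin

definition PSf :: "(nat \<Rightarrow> 'r) \<Rightarrow> nat \<Rightarrow> nat \<Rightarrow> 'r" where
  "PSf K = (\<lambda>i j. scale (of_nat ((i + j) choose j)) (K (i + j)))"

lemma PSf_add: "PSf (f + g) = PSf f + PSf g"
  by (simp add: PSf_def fun_eq_iff scale_right_distrib)
lemma PSf_cst1: "PSf (cst1 c) = cst2 c"
  by (auto simp: PSf_def fun_eq_iff cst1_def cst2_def)
lemma PSf_shiftL: "PSf (shiftL K) = opr (1,1,0) (PSf K)"
proof -
  have "PSf (shiftL K) i j = opr (1,1,0) (PSf K) i j" for i j
  proof (cases i)
    case 0 then show ?thesis by (cases j) (simp_all add: PSf_def opr_def sL_def sM_def shiftL_def)
  next
    case (Suc i')
    then show ?thesis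
    proof (cases j)
      case 0 then show ?thesis using Suc by (simp add: PSf_def opr_def sL_def sM_def shiftL_def)
    next
      case (Suc j')
      have e: "Suc i' + Suc j' choose Suc j' = (i' + Suc j' choose Suc j') + (Suc i' + j' choose j')"
        by simp
      show ?thesis using Suc \<open>i = Suc i'\<close>
        by (simp only: PSf_def opr_def sL_def sM_def shiftL_def e) (simp add: scale_left_distrib)
    qed
  qed
  then show ?thesis by (simp add: fun_eq_iff)
qed

lemma PS_sbst: "fin1 K \<Longrightarrow> PSf K = sbst (1,1,0) (0,1,0) (emb K)"
  by (rule U1[where A = "opr (1,1,0)"])
     (simp_all only: PSf_add emb_add sbst_add fin2_emb PSf_cst1 emb_cst1 sbst_cst2 PSf_shiftL emb_shiftL sbst_sL)

lemma psf_add: "lprod g \<Longrightarrow> psf g (d1 + d2) z = psf g d1 z + psf g d2 z"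
  by (simp add: psf_def plus_subst_def fun_eq_iff lprod_add1 scale_right_distrib sum.distrib)

lemma psf_cst1: "lprod g \<Longrightarrow> psf g (cst1 c) z = PSf (g c z)"
proof -
  assume g: "lprod g"
  have e: "g (cst1 c m) z n = (if m = 0 then g c z n else 0)" for m n
    by (simp add: cst1_def lprod_01 g)
  have "psf g (cst1 c) z i j = PSf (g c z) i j" for i j
  proof -
    have "psf g (cst1 c) z i j = (\<Sum>m\<le>i. if m = 0 then scale (of_nat ((i + j) choose j)) (g c z (i + j)) else 0)"
      unfolding psf_def plus_subst_def by (rule sum.cong) (auto simp: e)
    also have "\<dots> = PSf (g c z) i j" by (simp add: PSf_def)
    finally show ?thesis .
  qed
  then show ?thesis by (simp add: fun_eq_iff)
qed

lemma psf_shiftL: "lprod g \<Longrightarrow> psf g (shiftL d) z = opr (1,0,0) (psf g d z)"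
proof -
  assume g: "lprod g"
  have "psf g (shiftL d) z i j = sL (psf g d z) i j" for i j
  proof (cases i)
    case 0 then show ?thesis by (simp add: psf_def plus_subst_def shiftL_def sL_def lprod_01 g)
  next
    case (Suc i')
    show ?thesis unfolding psf_def plus_subst_def Suc
      by (subst sum.atMost_Suc_shift) (simp add: shiftL_def sL_def lprod_01 g)
  qed
  then show ?thesis by (simp add: fun_eq_iff opr_100)
qed

lemma ps_Y:
  assumes g: "lprod g" and d: "fin1 d"
  shows "psf g d z = sbst (1,1,0) (1,0,0) (Yg g z d)"
proof (rule U1[where A = "opr (1,0,0)", OF _ _ _ _ _ d])
  fix f1 f2 :: "nat \<Rightarrow> 'r" assume "fin1 f1" "fin1 f2"
  then show "sbst (1,1,0) (1,0,0) (Yg g z (f1 + f2)) = sbst (1,1,0) (1,0,0) (Yg g z f1) + sbst (1,1,0) (1,0,0) (Yg g z f2)"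
    by (simp add: Yg_add g sbst_add fin2_Yg)
next
  fix f1 f2 :: "nat \<Rightarrow> 'r"
  show "psf g (f1 + f2) z = psf g f1 z + psf g f2 z" by (rule psf_add[OF g])
next
  fix c
  have "sbst (1,1,0) (1,0,0) (emb (g c z)) = sbst (1,1,0) (0,1,0) (emb (g c z))"
    by (rule sbst_emb) (simp add: lprod_fin g)
  then show "psf g (cst1 c) z = sbst (1,1,0) (1,0,0) (Yg g z (cst1 c))"
    by (simp add: psf_cst1 g Yg_cst1 PS_sbst lprod_fin)
next
  fix f1 :: "nat \<Rightarrow> 'r" assume f1: "fin1 f1"
  show "sbst (1,1,0) (1,0,0) (Yg g z (shiftL f1)) = opr (1,0,0) (sbst (1,1,0) (1,0,0) (Yg g z f1))"
    by (simp add: Yg_shiftL g sbst_sM fin2_Yg f1)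
next
  fix f1 :: "nat \<Rightarrow> 'r"
  show "psf g (shiftL f1) z = opr (1,0,0) (psf g f1 z)" by (rule psf_shiftL[OF g])
qed

end

context cfa begin

definition assoc :: "('r \<Rightarrow> 'r \<Rightarrow> nat \<Rightarrow> 'r) \<Rightarrow> bool" where
  "assoc g \<longleftrightarrow> (\<forall>x y z. Xg g x (g y z) = psf g (g x y) z)"
definition opp :: "('r \<Rightarrow> 'r \<Rightarrow> nat \<Rightarrow> 'r) \<Rightarrow> 'r \<Rightarrow> 'r \<Rightarrow> nat \<Rightarrow> 'r" where
  "opp g = (\<lambda>u v. S (g v u))"

lemma lprod_opp: "lprod g \<Longrightarrow> lprod (opp g)"
  unfolding lprod_def opp_def
  by (simp add: fin1_S S_add S_sc)

lemma ses1_opp: "lprod g \<Longrightarrow> ses2 g \<Longrightarrow> ses1 (opp g)"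
proof -
  assume g: "lprod g" and s: "ses2 g"
  have "S (g z (D u)) = - shiftL (S (g z u))" for u z
  proof -
    have "S (g z (D u)) = S ((\<lambda>n. D (g z u n)) + shiftL (g z u))"
      using s by (simp add: ses2_def)
    also have "\<dots> = S (\<lambda>n. D (g z u n)) + S (shiftL (g z u))"
      by (rule S_add) (simp_all add: fin1_Dp fin1_shiftL lprod_fin g)
    also have "\<dots> = - shiftL (S (g z u))"
      by (simp add: S_Dp S_Lm lprod_fin g fun_eq_iff)
    finally show ?thesis .
  qed
  then show ?thesis by (simp add: ses1_def opp_def)
qed

lemma Xg_opp: "Xg (opp g) x w = colS (Yg g x w)"
  by (simp add: Xg_def opp_def colS_def Yg_def)
lemma Yg_opp: "Yg (opp g) z w = colS (Xg g z w)"
  by (simp add: Yg_def opp_def colS_def Xg_def)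

lemma F0:
  assumes g: "lprod g" "ses1 g" and f: "fin1 f"
  shows "psf g (S f) z = swp (psf g f z)"
proof -
  have "psf g (S f) z = sbst (1,1,0) (1,0,0) (sbst (1,0,0) (1,-1,0) (Yg g z f))"
    by (simp add: ps_Y Y_S g f fin1_S)
  also have "\<dots> = sbst (1,1,0) (0,1,0) (Yg g z f)"
    by (simp add: sbst_comp fin2_Yg g f compo_def)
  also have "\<dots> = sbst (0,1,0) (1,0,0) (sbst (1,1,0) (1,0,0) (Yg g z f))"
    by (simp add: sbst_comp fin2_Yg g f compo_def)
  also have "\<dots> = swp (psf g f z)"
    by (simp add: ps_Y g f swp_sbst fin2_sbst fin2_Yg)
  finally show ?thesis .
qed

context
  fixes M assumes Ml: "lprod M" and M1: "ses1 M" and M2: "ses2 M" and Ma: "assoc M"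
begin

lemma Ma': "Xg M x (M y z) = psf M (M x y) z" using Ma by (simp add: assoc_def)

lemma idB: "M x (S (M z y) q) p = S (M (M x z p) y) q"
proof -
  let ?Y = "Yg M y (M x z)"
  have fY: "fin2 ?Y" by (simp add: fin2_Yg Ml lprod_fin)
  have "Xg M x (S (M z y)) = sbst (1,0,0) (-1,-1,-1) (sbst (1,1,0) (1,0,0) ?Y)"
    by (simp add: X_S Ml M2 lprod_fin Ma' ps_Y)
  also have "\<dots> = sbst (0,-1,-1) (1,0,0) ?Y"
    by (simp add: sbst_comp fY compo_def)
  also have "\<dots> = sbst (1,0,0) (0,-1,-1) (sbst (0,1,0) (1,0,0) ?Y)"
    by (simp add: sbst_comp fY compo_def)
  also have "\<dots> = (\<lambda>p q. S (swp ?Y p) q)"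
    by (simp add: rowS_sbst swp_sbst fY fin2_swp fin2_sbst)
  finally have "Xg M x (S (M z y)) p q = S (swp ?Y p) q" by simp
  moreover have "swp ?Y p = M (M x z p) y" by (simp add: swp_def Yg_def fun_eq_iff)
  ultimately show ?thesis by (simp add: Xg_def)
qed

lemma idD: "assoc (opp M)"
proof -
  have "Xg (opp M) x (opp M y z) = psf (opp M) (opp M x y) z" for x y z
  proof -
    let ?K = "Xg M z (M y x)"
    have fK: "fin2 ?K" by (simp add: fin2_Xg Ml lprod_fin)
    have e1: "Yg M x (M z y) = sbst (0,1,0) (1,-1,0) ?K"
    proof -
      have "sbst (0,1,0) (1,-1,0) ?K = sbst (0,1,0) (1,-1,0) (sbst (1,1,0) (1,0,0) (Yg M x (M z y)))"
        by (simp add: Ma' ps_Y Ml lprod_fin)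
      also have "\<dots> = Yg M x (M z y)"
        by (simp add: sbst_comp fin2_Yg Ml lprod_fin compo_def sbst_id')
      finally show ?thesis by simp
    qed
    have "Xg (opp M) x (opp M y z) = colS (Yg M x (S (M z y)))"
      by (simp only: Xg_opp) (simp add: opp_def)
    also have "\<dots> = colS (sbst (1,0,0) (1,-1,0) (sbst (0,1,0) (1,-1,0) ?K))"
      by (simp add: Y_S Ml M1 lprod_fin e1)
    also have "\<dots> = sbst (-1,-1,-1) (0,1,0) ?K"
      by (simp add: colS_sbst fin2_sbst fK sbst_comp compo_def)
    also have "\<dots> = sbst (1,1,0) (1,0,0) (colS (sbst (1,0,0) (-1,-1,-1) ?K))"
      by (simp add: colS_sbst fin2_sbst fK sbst_comp compo_def)
    also have "\<dots> = sbst (1,1,0) (1,0,0) (colS (Xg M z (S (M y x))))"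
      by (simp add: X_S M2 Ml lprod_fin)
    also have "\<dots> = sbst (1,1,0) (1,0,0) (Yg (opp M) z (opp M x y))"
      by (simp only: Yg_opp) (simp add: opp_def)
    also have "\<dots> = psf (opp M) (opp M x y) z"
      by (rule ps_Y[symmetric]) (simp_all add: lprod_opp Ml lprod_fin)
    finally show ?thesis .
  qed
  then show ?thesis by (simp add: assoc_def)
qed

lemma idE: "psf (opp M) (M x y) z p q = S (M (S (M z x) p) y) q"
proof -
  have e: "M x y = S (opp M y x)" by (simp add: opp_def SS Ml lprod_fin)
  have "psf (opp M) (M x y) z = swp (psf (opp M) (opp M y x) z)"
    by (simp only: e) (rule F0, simp_all add: lprod_opp ses1_opp Ml M2 lprod_fin)
  also have "\<dots> = swp (Xg (opp M) y (opp M x z))"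
    using idD by (simp add: assoc_def)
  finally show ?thesis by (simp add: swp_def Xg_def opp_def)
qed

lemma idF: "psf M (S (M y x)) z p q = M y (M x z p) q"
proof -
  have "psf M (S (M y x)) z = swp (psf M (M y x) z)"
    by (rule F0) (simp_all add: Ml M1 lprod_fin)
  also have "\<dots> = swp (Xg M y (M x z))" by (simp add: Ma')
  finally show ?thesis by (simp add: swp_def Xg_def)
qed

end
end

context cfa begin

lemma ps_lin_g:
  "plus_subst scale (\<lambda>u v n. g1 u v n - scale s (g2 u v n)) d z i j
     = plus_subst scale g1 d z i j - scale s (plus_subst scale g2 d z i j)"
  unfolding plus_subst_def
  by (simp add: sum_subtractf scale_sum_right scale_right_diff_distrib mult.commute)

lemma ps_lin_d: "lprod g \<Longrightarrow>
  plus_subst scale g (\<lambda>n. d1 n - scale s (d2 n)) z i j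
     = plus_subst scale g d1 z i j - scale s (plus_subst scale g d2 z i j)"
  unfolding plus_subst_def
  by (simp add: lprod_diff1 lprod_sc1 sum_subtractf scale_sum_right scale_right_diff_distrib mult.commute)

lemma alg_id:
  fixes L1 L2 L3 L4 R2 R3 :: 'r and a b c :: complex
  assumes "a * a = 1"
  shows "(L1 - scale c L2) - scale (a*b) (L3 - scale c L4)
       = ((L1 - scale a R2) - scale (b*c) (R3 - scale a L4))
         + scale a ((R2 - scale b L3) - scale (a*c) (L2 - scale b R3))"
proof -
  have e1: "a * (a * c) = c" using assms by (metis mult.assoc mult_1)
  have e0: "a * (a * x) = x" for x using assms by (metis mult.assoc mult_1)
  show ?thesis
    by (simp add: scale_right_diff_distrib e0 algebra_simps)
qed

definition Cbr :: "('r \<Rightarrow> 'r \<Rightarrow> nat \<Rightarrow> 'r) \<Rightarrow> complex \<Rightarrow> 'r \<Rightarrow> 'r \<Rightarrow> nat \<Rightarrow> 'r" where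
  "Cbr M s u v = (\<lambda>n. M u v n - scale s (opp M u v n))"

lemma sgn_lemmas:
  fixes i j k :: nat
  assumes "i < 2" "j < 2" "k < 2"
  shows "(-1::complex) ^ (i * ((j + k) mod 2)) = (-1) ^ (i * j) * (-1) ^ (i * k)"
    and "(-1::complex) ^ (((i + j) mod 2) * k) = (-1) ^ (i * k) * (-1) ^ (j * k)"
    and "(-1::complex) ^ (j * ((i + k) mod 2)) = (-1) ^ (i * j) * (-1) ^ (j * k)"
    and "(-1::complex) ^ (i * j) * (-1) ^ (i * j) = 1"
proof -
  have "i = 0 \<or> i = 1" "j = 0 \<or> j = 1" "k = 0 \<or> k = 1" using assms by arith+
  then show "(-1::complex) ^ (i * ((j + k) mod 2)) = (-1) ^ (i * j) * (-1) ^ (i * k)"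
    and "(-1::complex) ^ (((i + j) mod 2) * k) = (-1) ^ (i * k) * (-1) ^ (j * k)"
    and "(-1::complex) ^ (j * ((i + k) mod 2)) = (-1) ^ (i * j) * (-1) ^ (j * k)"
    and "(-1::complex) ^ (i * j) * (-1) ^ (i * j) = 1"
    by auto
qed

context
  fixes M assumes Ml: "lprod M" and M1: "ses1 M" and M2: "ses2 M" and Ma: "assoc M"
begin

lemma core_jacobi:
  fixes a b c :: complex
  assumes aa: "a * a = 1"
  shows "Cbr M (a*b) X (Cbr M c Y Z q) p
       = plus_subst scale (Cbr M (b*c)) (Cbr M a X Y) Z p q
         + scale a (Cbr M (a*c) Y (Cbr M b X Z p) q)"
proof -
  have fin: "fin1 (M u v)" for u v by (simp add: Ml lprod_fin)
  have fino: "fin1 (opp M u v)" for u v by (simp add: lprod_opp Ml lprod_fin)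
  define L1 where "L1 = M X (M Y Z q) p"
  define L2 where "L2 = M X (S (M Z Y) q) p"
  define L3 where "L3 = S (M (M Y Z q) X) p"
  define L4 where "L4 = S (M (S (M Z Y) q) X) p"
  define R2 where "R2 = M Y (M X Z p) q"
  define R3 where "R3 = S (M (S (M Z X) p) Y) q"
  have lhs: "Cbr M (a*b) X (Cbr M c Y Z q) p = (L1 - scale c L2) - scale (a*b) (L3 - scale c L4)"
  proof -
    have "M X (Cbr M c Y Z q) p = L1 - scale c L2"
      by (simp add: Cbr_def L1_def L2_def lprod_diff2 lprod_sc2 Ml opp_def)
    moreover have "opp M X (Cbr M c Y Z q) p = L3 - scale c L4"
    proof -
      have "M (Cbr M c Y Z q) X = M (M Y Z q) X - (\<lambda>n. scale c (M (opp M Y Z q) X n))"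
        by (simp add: Cbr_def lprod_diff1 lprod_sc1 Ml fun_eq_iff)
      then have "opp M X (Cbr M c Y Z q) = S (M (M Y Z q) X) - S (\<lambda>n. scale c (M (opp M Y Z q) X n))"
        by (simp add: opp_def S_diff fin fin1_sc)
      then show ?thesis by (simp add: S_sc fin L3_def L4_def opp_def)
    qed
    ultimately show ?thesis by (simp add: Cbr_def)
  qed
  have rhs1: "plus_subst scale (Cbr M (b*c)) (Cbr M a X Y) Z p q
       = (L1 - scale a R2) - scale (b*c) (R3 - scale a L4)"
  proof -
    have "plus_subst scale (Cbr M (b*c)) (Cbr M a X Y) Z p q
        = plus_subst scale M (Cbr M a X Y) Z p q - scale (b*c) (plus_subst scale (opp M) (Cbr M a X Y) Z p q)"
      unfolding Cbr_def[of M "b*c"] by (rule ps_lin_g)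
    also have "\<dots> = (plus_subst scale M (M X Y) Z p q - scale a (plus_subst scale M (opp M X Y) Z p q))
        - scale (b*c) (plus_subst scale (opp M) (M X Y) Z p q - scale a (plus_subst scale (opp M) (opp M X Y) Z p q))"
      unfolding Cbr_def by (simp only: ps_lin_d Ml lprod_opp)
    also have "\<dots> = (L1 - scale a R2) - scale (b*c) (R3 - scale a L4)"
    proof -
      have "plus_subst scale M (M X Y) Z p q = L1" using Ma' [OF Ml M1 M2 Ma, of X Y Z]
        by (simp add: L1_def Xg_def psf_def fun_eq_iff)
      moreover have "plus_subst scale M (opp M X Y) Z p q = R2"
        using idF[OF Ml M1 M2 Ma, of Y X Z p q] by (simp add: R2_def psf_def opp_def)
      moreover have "plus_subst scale (opp M) (M X Y) Z p q = R3"
        using idE[OF Ml M1 M2 Ma, of X Y Z p q] by (simp add: R3_def psf_def)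
      moreover have "plus_subst scale (opp M) (opp M X Y) Z p q = L4"
        using idD[OF Ml M1 M2 Ma] unfolding assoc_def
        by (drule_tac x=X in spec, drule_tac x=Y in spec, drule_tac x=Z in spec)
           (simp add: L4_def psf_def Xg_def opp_def fun_eq_iff)
      ultimately show ?thesis by simp
    qed
    finally show ?thesis .
  qed
  have rhs2: "Cbr M (a*c) Y (Cbr M b X Z p) q = (R2 - scale b L3) - scale (a*c) (L2 - scale b R3)"
  proof -
    have t2: "M Y (S (M Z X) p) q = L3" using idB[OF Ml M1 M2 Ma, of Y Z X p q] by (simp add: L3_def)
    have t3: "S (M (M X Z p) Y) q = L2" using idB[OF Ml M1 M2 Ma, of X Z Y q p] by (simp add: L2_def)
    have "M Y (Cbr M b X Z p) q = R2 - scale b L3"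
      by (simp add: Cbr_def R2_def lprod_diff2 lprod_sc2 Ml opp_def t2)
    moreover have "opp M Y (Cbr M b X Z p) q = L2 - scale b R3"
    proof -
      have "M (Cbr M b X Z p) Y = M (M X Z p) Y - (\<lambda>n. scale b (M (opp M X Z p) Y n))"
        by (simp add: Cbr_def lprod_diff1 lprod_sc1 Ml fun_eq_iff)
      then have "opp M Y (Cbr M b X Z p) = S (M (M X Z p) Y) - S (\<lambda>n. scale b (M (opp M X Z p) Y n))"
        by (simp add: opp_def S_diff fin fin1_sc)
      then show ?thesis by (simp add: S_sc fin R3_def t3 opp_def)
    qed
    ultimately show ?thesis by (simp add: Cbr_def)
  qed
  show ?thesis using alg_id[OF aa, of L1 c L2 b L3 L4 R2 R3] by (simp only: lhs rhs1 rhs2)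
qed

end
end

locale bh = cfa scale D for scale :: "complex \<Rightarrow> 'r::ab_group_add \<Rightarrow> 'r" and D +
  fixes Rg :: "nat \<Rightarrow> 'r set" and m :: "'r \<Rightarrow> 'r \<Rightarrow> nat \<Rightarrow> 'r" and al be :: "'r \<Rightarrow> 'r"
  assumes A: "regular_BiHom_assoc_conf_super scale D Rg m al be"
begin

lemma AA: "(graded_CD_module scale D Rg \<and> graded_lprod scale Rg m \<and>
     clin scale al \<and> clin scale be \<and> al \<circ> be = be \<circ> al \<and>
     (\<forall>i<2. al ` Rg i \<subseteq> Rg i \<and> be ` Rg i \<subseteq> Rg i) \<and>
     (\<forall>a b n. m (D a) b n = - shiftL (m a b) n) \<and>
     (\<forall>a b n. m a (D b) n = D (m a b n) + shiftL (m a b) n) \<and>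
     al \<circ> D = D \<circ> al \<and> be \<circ> D = D \<circ> be \<and>
     (\<forall>a b n. al (m a b n) = m (al a) (al b) n) \<and>
     (\<forall>a b n. be (m a b n) = m (be a) (be b) n) \<and>
     (\<forall>a b c i j. m (al a) (m b c j) i = plus_subst scale m (m a b) (be c) i j)) \<and> bij al \<and> bij be"
  using A unfolding regular_BiHom_assoc_conf_super_def BiHom_assoc_conf_super_def .

lemma GCD: "graded_CD_module scale D Rg" using AA by (elim conjE) assumption
lemma sub0: "csubspace scale (Rg 0)" using GCD by (simp add: graded_CD_module_def)
lemma sub1: "csubspace scale (Rg 1)" using GCD by (simp add: graded_CD_module_def)
lemma less2: "i < (2::nat) \<Longrightarrow> i = 0 \<or> i = 1" by arith
lemma subi: "i < 2 \<Longrightarrow> csubspace scale (Rg i)"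
  using sub0 sub1 less2[of i] by auto
lemma Rg_int: "Rg 0 \<inter> Rg 1 = {0}" using GCD by (simp add: graded_CD_module_def)
lemma Rg_dec: "\<exists>x\<in>Rg 0. \<exists>y\<in>Rg 1. a = x + y" using GCD by (simp add: graded_CD_module_def)
lemma D_Rg: "i < 2 \<Longrightarrow> x \<in> Rg i \<Longrightarrow> D x \<in> Rg i"
proof -
  have "\<forall>i<2. D ` Rg i \<subseteq> Rg i" using GCD by (simp add: graded_CD_module_def)
  then show "i < 2 \<Longrightarrow> x \<in> Rg i \<Longrightarrow> D x \<in> Rg i" by blast
qed

lemma Rg_0: "i < 2 \<Longrightarrow> 0 \<in> Rg i" using subi by (simp add: csubspace_def)
lemma Rg_add: "i < 2 \<Longrightarrow> x \<in> Rg i \<Longrightarrow> y \<in> Rg i \<Longrightarrow> x + y \<in> Rg i"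
  using subi by (simp add: csubspace_def)
lemma Rg_scale: "i < 2 \<Longrightarrow> x \<in> Rg i \<Longrightarrow> scale c x \<in> Rg i"
  using subi by (simp add: csubspace_def)
lemma Rg_neg: "i < 2 \<Longrightarrow> x \<in> Rg i \<Longrightarrow> - x \<in> Rg i"
  using Rg_scale[of i x "-1"] by simp
lemma Rg_diff: assumes "i < 2" "x \<in> Rg i" "y \<in> Rg i" shows "x - y \<in> Rg i"
proof -
  have "x + - y \<in> Rg i" using assms by (intro Rg_add Rg_neg)
  then show ?thesis by (simp only: diff_conv_add_uminus)
qed
lemma Rg_sum: assumes "i < 2" shows "(\<And>t. t \<in> T \<Longrightarrow> F t \<in> Rg i) \<Longrightarrow> sum F T \<in> Rg i"
proof (induct T rule: infinite_finite_induct)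
  case (infinite A) then show ?case using Rg_0[OF assms] by simp
next
  case empty then show ?case using Rg_0[OF assms] by simp
next
  case (insert x F) then show ?case using Rg_add[OF assms] by simp
qed
lemma Rg_Dp: assumes "i < 2" "x \<in> Rg i" shows "(D^^n) x \<in> Rg i"
proof (induct n)
  case 0 then show ?case using assms by simp
next
  case (Suc n) then show ?case using D_Rg[OF assms(1)] by simp
qed
lemma Rg_int': assumes "i < 2" "x \<in> Rg i" "x \<in> Rg (1 - i)" shows "x = 0"
proof -
  have "x \<in> Rg 0 \<inter> Rg 1" using assms less2[of i] by auto
  then show ?thesis using Rg_int by blast
qed

lemma mlp: "graded_lprod scale Rg m" using AA by (elim conjE) assumption
lemma m_fin: "fin1 (m a b)"
proof -
  have "finite {n. m a b n \<noteq> 0}" using mlp by (simp add: graded_lprod_def)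
  then obtain N where "\<forall>n\<in>{n. m a b n \<noteq> 0}. n < N" by (auto simp: finite_nat_set_iff_bounded)
  then show ?thesis unfolding fin1_def by auto
qed
lemma m_add1: "m (x + y) b n = m x b n + m y b n"
  using mlp by (simp add: graded_lprod_def clin_def)
lemma m_sc1: "m (scale c x) b n = scale c (m x b n)"
  using mlp by (simp add: graded_lprod_def clin_def)
lemma m_add2: "m a (x + y) n = m a x n + m a y n"
  using mlp by (simp add: graded_lprod_def clin_def)
lemma m_sc2: "m a (scale c x) n = scale c (m a x n)"
  using mlp by (simp add: graded_lprod_def clin_def)
lemma m_Rg: "i < 2 \<Longrightarrow> j < 2 \<Longrightarrow> a \<in> Rg i \<Longrightarrow> b \<in> Rg j \<Longrightarrow> m a b n \<in> Rg ((i + j) mod 2)"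
  using mlp by (simp add: graded_lprod_def)

lemma clal: "clin scale al" using AA by (elim conjE) assumption
lemma clbe: "clin scale be" using AA by (elim conjE) assumption
lemma al_add: "al (x + y) = al x + al y" using clal by (simp add: clin_def)
lemma al_sc: "al (scale c x) = scale c (al x)" using clal by (simp add: clin_def)
lemma be_add: "be (x + y) = be x + be y" using clbe by (simp add: clin_def)
lemma be_sc: "be (scale c x) = scale c (be x)" using clbe by (simp add: clin_def)
lemma al_be: "al (be x) = be (al x)"
proof -
  have "al \<circ> be = be \<circ> al" using AA by (elim conjE) assumption
  then show ?thesis by (simp add: fun_eq_iff)
qed
lemma alRg: "\<forall>i<2. al ` Rg i \<subseteq> Rg i \<and> be ` Rg i \<subseteq> Rg i" using AA by (elim conjE) assumption
lemma al_Rg: "i < 2 \<Longrightarrow> x \<in> Rg i \<Longrightarrow> al x \<in> Rg i" using alRg by blast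
lemma be_Rg: "i < 2 \<Longrightarrow> x \<in> Rg i \<Longrightarrow> be x \<in> Rg i" using alRg by blast
lemma m_D1_all: "\<forall>a b n. m (D a) b n = - shiftL (m a b) n" using AA by (elim conjE) assumption
lemma m_D2_all: "\<forall>a b n. m a (D b) n = D (m a b n) + shiftL (m a b) n" using AA by (elim conjE) assumption
lemma m_D1: "m (D a) b = - shiftL (m a b)" using m_D1_all by (simp add: fun_eq_iff)
lemma m_D2: "m a (D b) = (\<lambda>n. D (m a b n)) + shiftL (m a b)" using m_D2_all by (simp add: fun_eq_iff)
lemma al_D: "al (D x) = D (al x)"
proof -
  have "al \<circ> D = D \<circ> al" using AA by (elim conjE) assumption
  then show ?thesis by (simp add: fun_eq_iff)
qed
lemma be_D: "be (D x) = D (be x)"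
proof -
  have "be \<circ> D = D \<circ> be" using AA by (elim conjE) assumption
  then show ?thesis by (simp add: fun_eq_iff)
qed
lemma al_m_all: "\<forall>a b n. al (m a b n) = m (al a) (al b) n" using AA by (elim conjE) assumption
lemma be_m_all: "\<forall>a b n. be (m a b n) = m (be a) (be b) n" using AA by (elim conjE) assumption
lemma m_assoc_all: "\<forall>a b c i j. m (al a) (m b c j) i = plus_subst scale m (m a b) (be c) i j"
  using AA by (elim conjE) assumption
lemma al_m: "al (m a b n) = m (al a) (al b) n" using al_m_all by simp
lemma be_m: "be (m a b n) = m (be a) (be b) n" using be_m_all by simp
lemma m_assoc: "m (al a) (m b c j) i = plus_subst scale m (m a b) (be c) i j" using m_assoc_all by simp
lemma bij_al: "bij al" using AA by (elim conjE) assumption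
lemma bij_be: "bij be" using AA by (elim conjE) assumption

end

context bh begin

abbreviation ia where "ia \<equiv> inv al"
abbreviation ib where "ib \<equiv> inv be"

lemma al_ia[simp]: "al (ia x) = x" using bij_al by (simp add: bij_is_surj surj_f_inv_f)
lemma ia_al[simp]: "ia (al x) = x" using bij_al by (simp add: bij_is_inj inv_f_f)
lemma be_ib[simp]: "be (ib x) = x" using bij_be by (simp add: bij_is_surj surj_f_inv_f)
lemma ib_be[simp]: "ib (be x) = x" using bij_be by (simp add: bij_is_inj inv_f_f)

lemma al_0[simp]: "al 0 = 0" using al_add[of 0 0] by simp
lemma be_0[simp]: "be 0 = 0" using be_add[of 0 0] by simp

lemma ia_add: "ia (x + y) = ia x + ia y"
proof -
  have "ia (x + y) = ia (al (ia x + ia y))" by (simp add: al_add)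
  then show ?thesis by simp
qed
lemma ib_add: "ib (x + y) = ib x + ib y"
proof -
  have "ib (x + y) = ib (be (ib x + ib y))" by (simp add: be_add)
  then show ?thesis by simp
qed
lemma ia_0[simp]: "ia 0 = 0" using ia_add[of 0 0] by simp
lemma ib_0[simp]: "ib 0 = 0" using ib_add[of 0 0] by simp
lemma ia_sc: "ia (scale c x) = scale c (ia x)"
proof -
  have "ia (scale c x) = ia (al (scale c (ia x)))" by (simp add: al_sc)
  then show ?thesis by simp
qed
lemma ib_sc: "ib (scale c x) = scale c (ib x)"
proof -
  have "ib (scale c x) = ib (be (scale c (ib x)))" by (simp add: be_sc)
  then show ?thesis by simp
qed
lemma ia_D: "ia (D x) = D (ia x)"
proof -
  have "ia (D x) = ia (al (D (ia x)))" by (simp add: al_D)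
  then show ?thesis by simp
qed
lemma ib_D: "ib (D x) = D (ib x)"
proof -
  have "ib (D x) = ib (be (D (ib x)))" by (simp add: be_D)
  then show ?thesis by simp
qed
lemma ia_be: "ia (be x) = be (ia x)"
proof -
  have "ia (be x) = ia (al (be (ia x)))" by (simp add: al_be)
  then show ?thesis by simp
qed
lemma ib_al: "ib (al x) = al (ib x)"
proof -
  have "ib (al x) = ib (be (al (ib x)))" by (simp add: al_be[symmetric])
  then show ?thesis by simp
qed
lemma ia_ib: "ia (ib x) = ib (ia x)"
proof -
  have "ia (ib x) = ia (al (ib (ia x)))" by (simp add: ib_al[symmetric])
  then show ?thesis by simp
qed
lemma ia_m: "ia (m a b n) = m (ia a) (ia b) n"
proof -
  have "ia (m a b n) = ia (al (m (ia a) (ia b) n))" by (simp add: al_m)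
  then show ?thesis by simp
qed
lemma ib_m: "ib (m a b n) = m (ib a) (ib b) n"
proof -
  have "ib (m a b n) = ib (be (m (ib a) (ib b) n))" by (simp add: be_m)
  then show ?thesis by simp
qed

lemma inv_Rg:
  assumes fg: "\<And>x. f (g x) = x" and gf: "\<And>x. g (f x) = x" and fa: "\<And>x y. f (x + y) = f x + f y"
    and fR: "\<And>j x. j < 2 \<Longrightarrow> x \<in> Rg j \<Longrightarrow> f x \<in> Rg j" and i: "i < 2" and x: "x \<in> Rg i"
  shows "g x \<in> Rg i"
proof -
  have f0: "f 0 = 0" using fa[of 0 0] by simp
  have g0: "g 0 = 0" using gf[of 0] f0 by simp
  obtain y0 y1 where y0: "y0 \<in> Rg 0" and y1: "y1 \<in> Rg 1" and e: "g x = y0 + y1" using Rg_dec by blast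
  have ex: "x = f y0 + f y1" using fg[of x] e fa by simp
  have r0: "f y0 \<in> Rg 0" and r1: "f y1 \<in> Rg 1" using fR y0 y1 by auto
  show ?thesis
  proof (cases "i = 0")
    case True
    have "f y1 = x - f y0" using ex by (simp add: algebra_simps)
    also have "\<dots> \<in> Rg 0" using Rg_diff[of 0 x "f y0"] x True r0 by simp
    finally have "f y1 = 0" using r1 Rg_int by blast
    then have "y1 = 0" using gf[of y1] g0 by simp
    then show ?thesis using e y0 True by simp
  next
    case False
    then have i1: "i = 1" using i by arith
    have "f y0 = x - f y1" using ex by (simp add: algebra_simps)
    also have "\<dots> \<in> Rg 1" using Rg_diff[of 1 x "f y1"] x i1 r1 by simp
    finally have "f y0 = 0" using r0 Rg_int by blast
    then have "y0 = 0" using gf[of y0] g0 by simp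
    then show ?thesis using e y1 i1 by simp
  qed
qed

lemma ia_Rg: "i < 2 \<Longrightarrow> x \<in> Rg i \<Longrightarrow> ia x \<in> Rg i"
  by (rule inv_Rg[where f = al]) (auto simp: al_add al_Rg)
lemma ib_Rg: "i < 2 \<Longrightarrow> x \<in> Rg i \<Longrightarrow> ib x \<in> Rg i"
  by (rule inv_Rg[where f = be]) (auto simp: be_add be_Rg)

end

context bh begin

abbreviation G where "G \<equiv> gcomp Rg"

lemma one_minus: "i < 2 \<Longrightarrow> 1 - i < (2::nat)" by arith

lemma gc_char:
  assumes i: "i < 2" and x: "x \<in> Rg i" and ax: "a - x \<in> Rg (1 - i)"
  shows "G i a = x"
  unfolding gcomp_def
proof (rule the_equality)
  show "x \<in> Rg i \<and> a - x \<in> Rg (1 - i)" using x ax by simp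
next
  fix y assume y: "y \<in> Rg i \<and> a - y \<in> Rg (1 - i)"
  have d1: "y - x \<in> Rg i" using Rg_diff[OF i] y x by blast
  have "(a - x) - (a - y) \<in> Rg (1 - i)" using Rg_diff[OF one_minus[OF i]] y ax by blast
  then have d2: "y - x \<in> Rg (1 - i)" by (simp add: algebra_simps)
  have "y - x = 0" by (rule Rg_int'[OF i d1 d2])
  then show "y = x" by simp
qed

lemma gc_ex: "i < 2 \<Longrightarrow> \<exists>x. x \<in> Rg i \<and> a - x \<in> Rg (1 - i)"
proof -
  assume i: "i < 2"
  obtain x y where x: "x \<in> Rg 0" and y: "y \<in> Rg 1" and e: "a = x + y" using Rg_dec by blast
  show ?thesis
  proof (cases "i = 0")
    case True then show ?thesis using x y e by (intro exI[of _ x]) simp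
  next
    case False then have "i = 1" using i by arith
    then show ?thesis using x y e by (intro exI[of _ y]) simp
  qed
qed

lemma gc_mem: "i < 2 \<Longrightarrow> G i a \<in> Rg i"
  using gc_ex gc_char by metis
lemma gc_mem2: "i < 2 \<Longrightarrow> a - G i a \<in> Rg (1 - i)"
  using gc_ex gc_char by metis

lemma gc_hom:
  assumes i: "i < 2" and j: "j < 2" and a: "a \<in> Rg i"
  shows "G j a = (if j = i then a else 0)"
proof (cases "j = i")
  case True
  show ?thesis using True by (simp add: gc_char[OF i a] Rg_0 one_minus i)
next
  case False
  then have ji: "1 - j = i" using i j by arith
  have "a - 0 \<in> Rg (1 - j)" using ji a by simp
  then show ?thesis using False by (simp add: gc_char[OF j Rg_0[OF j]])
qed

lemma gc_add: "i < 2 \<Longrightarrow> G i (a + b) = G i a + G i b"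
proof -
  assume i: "i < 2"
  have "(a + b) - (G i a + G i b) = (a - G i a) + (b - G i b)" by (simp add: algebra_simps)
  also have "\<dots> \<in> Rg (1 - i)" by (intro Rg_add one_minus i gc_mem2)
  finally show ?thesis by (intro gc_char i Rg_add gc_mem)
qed

lemma gc_lin:
  assumes i: "i < 2" and fd: "\<And>x y. f (x - y) = f x - f y" and fR: "\<And>j x. j < 2 \<Longrightarrow> x \<in> Rg j \<Longrightarrow> f x \<in> Rg j"
  shows "G i (f a) = f (G i a)"
proof -
  have "f a - f (G i a) = f (a - G i a)" by (simp add: fd)
  also have "\<dots> \<in> Rg (1 - i)" by (intro fR one_minus i gc_mem2)
  finally show ?thesis by (intro gc_char i fR gc_mem)
qed

lemma al_diff: "al (x - y) = al x - al y"
  using al_add[of "x - y" y] by (simp add: algebra_simps)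
lemma be_diff: "be (x - y) = be x - be y"
  using be_add[of "x - y" y] by (simp add: algebra_simps)
lemma ia_diff: "ia (x - y) = ia x - ia y"
  using ia_add[of "x - y" y] by (simp add: algebra_simps)
lemma ib_diff: "ib (x - y) = ib x - ib y"
  using ib_add[of "x - y" y] by (simp add: algebra_simps)

lemma gc_sc: "i < 2 \<Longrightarrow> G i (scale c a) = scale c (G i a)"
  by (rule gc_lin) (auto simp: scale_right_diff_distrib Rg_scale)
lemma gc_D: "i < 2 \<Longrightarrow> G i (D a) = D (G i a)"
  by (rule gc_lin) (auto simp: D_diff D_Rg)
lemma gc_al: "i < 2 \<Longrightarrow> G i (al a) = al (G i a)"
  by (rule gc_lin) (auto simp: al_diff al_Rg)
lemma gc_be: "i < 2 \<Longrightarrow> G i (be a) = be (G i a)"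
  by (rule gc_lin) (auto simp: be_diff be_Rg)

text \<open>The untwisted product.\<close>
definition MM :: "'r \<Rightarrow> 'r \<Rightarrow> nat \<Rightarrow> 'r" where
  "MM x y = m (ia x) (ib y)"

lemma m_MM: "m a b = MM (al a) (be b)" by (simp add: MM_def)

lemma MM_lprod: "lprod MM"
  unfolding lprod_def MM_def
  by (simp add: m_fin fun_eq_iff m_add1 m_add2 m_sc1 m_sc2 ia_add ib_add ia_sc ib_sc)

lemma MM_ses1: "ses1 MM"
  unfolding ses1_def MM_def by (simp add: ia_D m_D1)
lemma MM_ses2: "ses2 MM"
  unfolding ses2_def MM_def by (simp add: ib_D m_D2)

lemma MM_assoc: "assoc MM"
proof -
  have "Xg MM x (MM y z) a b = psf MM (MM x y) z a b" for x y z a b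
  proof -
    have "Xg MM x (MM y z) a b = m (al (ia (ia x))) (m (ib (ia y)) (ib (ib z)) b) a"
      by (simp add: Xg_def MM_def ib_m)
    also have "\<dots> = plus_subst scale m (m (ia (ia x)) (ib (ia y))) (be (ib (ib z))) a b"
      by (rule m_assoc)
    also have "\<dots> = psf MM (MM x y) z a b"
      by (simp add: psf_def plus_subst_def MM_def ia_m ia_ib)
    finally show ?thesis .
  qed
  then show ?thesis by (simp add: assoc_def fun_eq_iff)
qed

lemma MM_Rg: "i < 2 \<Longrightarrow> j < 2 \<Longrightarrow> x \<in> Rg i \<Longrightarrow> y \<in> Rg j \<Longrightarrow> MM x y n \<in> Rg ((i + j) mod 2)"
  unfolding MM_def by (intro m_Rg ia_Rg ib_Rg)

lemma al_MM: "al (MM x y n) = MM (al x) (al y) n"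
  by (simp add: MM_def al_m ib_al)
lemma be_MM: "be (MM x y n) = MM (be x) (be y) n"
  by (simp add: MM_def be_m ia_be)

end

context cfa begin

lemma lin_S:
  assumes pa: "\<And>x y. \<phi> (x + y) = \<phi> x + \<phi> y" and ps: "\<And>c x. \<phi> (scale c x) = scale c (\<phi> x)"
    and pD: "\<And>x. \<phi> (D x) = D (\<phi> x)" and f: "fin1 f"
  shows "\<phi> (S f k) = S (\<lambda>n. \<phi> (f n)) k"
proof -
  have p0: "\<phi> 0 = 0" using pa[of 0 0] by simp
  have psum: "\<phi> (sum F T) = (\<Sum>t\<in>T. \<phi> (F t))" for F and T :: "nat set"
    by (induct T rule: infinite_finite_induct) (simp_all add: p0 pa)
  have pDp: "\<phi> ((D^^j) x) = (D^^j) (\<phi> x)" for j x by (induct j) (simp_all add: pD)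
  obtain N where N: "\<forall>n. f n \<noteq> 0 \<longrightarrow> n < N" using f by (auto simp: fin1_def)
  have N2: "\<forall>n. \<phi> (f n) \<noteq> 0 \<longrightarrow> n < N" using N p0 by metis
  show ?thesis by (simp add: S_alt[OF N] S_alt[OF N2] psum ps pDp)
qed

lemma sum2: "(\<Sum>i<(2::nat). f i) = f 0 + f 1"
  by (simp add: numeral_2_eq_2)

end

context bh begin

abbreviation br where "br \<equiv> induced_bracket scale D Rg m al be"
definition TT :: "nat \<Rightarrow> nat \<Rightarrow> 'r \<Rightarrow> 'r \<Rightarrow> nat \<Rightarrow> 'r" where
  "TT i j a b = S (m (ia (be (G j b))) (al (ib (G i a))))"

lemma br_eq: "br a b n = m a b n - (\<Sum>i<2. \<Sum>j<2. scale ((-1) ^ (i * j)) (TT i j a b n))"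
  by (simp add: induced_bracket_def TT_def)

lemma m_01: "m 0 y = 0" using m_add1[of 0 0 y] by (simp add: fun_eq_iff)
lemma m_02: "m x 0 = 0" using m_add2[of x 0 0] by (simp add: fun_eq_iff)

lemma fin1_TT: "fin1 (TT i j a b)" by (simp add: TT_def fin1_S m_fin)

lemma TT_hom:
  assumes i: "i < 2" and j: "j < 2" and a: "a \<in> Rg i" and b: "b \<in> Rg j" and i': "i' < 2" and j': "j' < 2"
  shows "TT i' j' a b = (if i' = i \<and> j' = j then S (MM (be b) (al a)) else 0)"
proof -
  have "MM (be b) (al a) = m (ia (be b)) (al (ib a))"
    by (simp add: MM_def ia_be ib_al)
  then show ?thesis
    by (simp add: TT_def gc_hom[OF i i' a] gc_hom[OF j j' b] m_01 m_02)
qed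

lemma br_hom:
  assumes i: "i < 2" and j: "j < 2" and a: "a \<in> Rg i" and b: "b \<in> Rg j"
  shows "br a b = Cbr MM ((-1) ^ (i * j)) (al a) (be b)"
proof -
  have "br a b n = Cbr MM ((-1) ^ (i * j)) (al a) (be b) n" for n
  proof -
    have s: "(\<Sum>i'<2. \<Sum>j'<2. scale ((-1) ^ (i' * j')) (TT i' j' a b n))
        = scale ((-1) ^ (i * j)) (S (MM (be b) (al a)) n)"
      using less2[OF i] less2[OF j]
      by (auto simp: sum2 TT_hom[OF i j a b])
    show ?thesis by (simp add: br_eq s Cbr_def opp_def m_MM)
  qed
  then show ?thesis by (simp add: fun_eq_iff)
qed

lemma S_Rg:
  assumes l: "l < 2" and f: "\<And>n. f n \<in> Rg l"
  shows "S f k \<in> Rg l"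
  unfolding subst_neg_def by (intro Rg_sum l Rg_scale Rg_Dp f)

lemma Cbr_Rg:
  assumes "i < 2" "j < 2" "x \<in> Rg i" "y \<in> Rg j"
  shows "Cbr MM s x y n \<in> Rg ((i + j) mod 2)"
proof -
  have l: "(i + j) mod 2 < 2" by simp
  have "MM y x k \<in> Rg ((i + j) mod 2)" for k using MM_Rg[of j i y x k] assms by (simp add: add.commute)
  then have "S (MM y x) n \<in> Rg ((i + j) mod 2)" by (intro S_Rg l)
  then show ?thesis unfolding Cbr_def opp_def
    by (intro Rg_diff l Rg_scale MM_Rg assms)
qed

lemma br_Rg:
  assumes "i < 2" "j < 2" "a \<in> Rg i" "b \<in> Rg j"
  shows "br a b n \<in> Rg ((i + j) mod 2)"
  using assms by (simp add: br_hom Cbr_Rg al_Rg be_Rg)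

lemma m_add1f: "m (x + y) b = m x b + m y b" by (simp add: fun_eq_iff m_add1)
lemma m_add2f: "m a (x + y) = m a x + m a y" by (simp add: fun_eq_iff m_add2)
lemma m_sc1f: "m (scale c x) b = (\<lambda>n. scale c (m x b n))" by (simp add: fun_eq_iff m_sc1)
lemma m_sc2f: "m a (scale c x) = (\<lambda>n. scale c (m a x n))" by (simp add: fun_eq_iff m_sc2)

lemma TT_add1: "i < 2 \<Longrightarrow> TT i j (x + y) b = TT i j x b + TT i j y b"
  by (simp add: TT_def gc_add ib_add al_add m_add2f S_add m_fin)
lemma TT_add2: "j < 2 \<Longrightarrow> TT i j a (x + y) = TT i j a x + TT i j a y"
  by (simp add: TT_def gc_add ia_add be_add m_add1f S_add m_fin)
lemma TT_sc1: "i < 2 \<Longrightarrow> TT i j (scale c x) b = (\<lambda>n. scale c (TT i j x b n))"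
  by (simp add: TT_def gc_sc ib_sc al_sc m_sc2f S_sc m_fin)
lemma TT_sc2: "j < 2 \<Longrightarrow> TT i j a (scale c x) = (\<lambda>n. scale c (TT i j a x n))"
  by (simp add: TT_def gc_sc ia_sc be_sc m_sc1f S_sc m_fin)

lemma br_add1: "br (x + y) b n = br x b n + br y b n"
proof -
  have "(\<Sum>i<2. \<Sum>j<2. scale ((-1) ^ (i * j)) (TT i j (x + y) b n))
      = (\<Sum>i<2. \<Sum>j<2. scale ((-1) ^ (i * j)) (TT i j x b n)) + (\<Sum>i<2. \<Sum>j<2. scale ((-1) ^ (i * j)) (TT i j y b n))"
    by (simp add: sum2 TT_add1 scale_right_distrib)
  then show ?thesis by (simp add: br_eq m_add1)
qed
lemma br_add2: "br a (x + y) n = br a x n + br a y n"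
proof -
  have "(\<Sum>i<2. \<Sum>j<2. scale ((-1) ^ (i * j)) (TT i j a (x + y) n))
      = (\<Sum>i<2. \<Sum>j<2. scale ((-1) ^ (i * j)) (TT i j a x n)) + (\<Sum>i<2. \<Sum>j<2. scale ((-1) ^ (i * j)) (TT i j a y n))"
    by (simp add: sum2 TT_add2 scale_right_distrib)
  then show ?thesis by (simp add: br_eq m_add2)
qed
lemma br_sc1: "br (scale c x) b n = scale c (br x b n)"
proof -
  have "(\<Sum>i<2. \<Sum>j<2. scale ((-1) ^ (i * j)) (TT i j (scale c x) b n))
      = scale c (\<Sum>i<2. \<Sum>j<2. scale ((-1) ^ (i * j)) (TT i j x b n))"
    by (simp add: sum2 TT_sc1 scale_right_distrib scale_right_diff_distrib scale_left_commute)
  then show ?thesis by (simp add: br_eq m_sc1 scale_right_diff_distrib)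
qed
lemma br_sc2: "br a (scale c x) n = scale c (br a x n)"
proof -
  have "(\<Sum>i<2. \<Sum>j<2. scale ((-1) ^ (i * j)) (TT i j a (scale c x) n))
      = scale c (\<Sum>i<2. \<Sum>j<2. scale ((-1) ^ (i * j)) (TT i j a x n))"
    by (simp add: sum2 TT_sc2 scale_right_distrib scale_right_diff_distrib scale_left_commute)
  then show ?thesis by (simp add: br_eq m_sc2 scale_right_diff_distrib)
qed

lemma br_fin: "fin1 (br a b)"
proof -
  have e: "br a b = m a b - ((TT 0 0 a b + TT 0 1 a b) + ((\<lambda>n. scale ((-1) ^ (1 * 0)) (TT 1 0 a b n)) + (\<lambda>n. scale ((-1) ^ (1 * 1)) (TT 1 1 a b n))))"
    by (simp add: fun_eq_iff br_eq sum2)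
  show ?thesis unfolding e
    by (intro fin1_diff fin1_add fin1_sc m_fin fin1_TT)
qed

end

context bh begin

lemma al_S: "fin1 f \<Longrightarrow> al (S f k) = S (\<lambda>n. al (f n)) k"
  by (rule lin_S) (simp_all add: al_add al_sc al_D)
lemma be_S: "fin1 f \<Longrightarrow> be (S f k) = S (\<lambda>n. be (f n)) k"
  by (rule lin_S) (simp_all add: be_add be_sc be_D)

lemma TT_al: "i < 2 \<Longrightarrow> j < 2 \<Longrightarrow> TT i j (al a) (al b) n = al (TT i j a b n)"
proof -
  assume i: "i < 2" and j: "j < 2"
  have "m (ia (be (G j (al b)))) (al (ib (G i (al a)))) = (\<lambda>n. al (m (ia (be (G j b))) (al (ib (G i a))) n))"
    by (simp add: fun_eq_iff gc_al[OF i] gc_al[OF j] ia_be ib_al al_m al_be)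
  then show ?thesis by (simp add: TT_def al_S m_fin)
qed

lemma be_al_ib: "be (al (ib z)) = al z" by (metis al_be be_ib)

lemma TT_be: "i < 2 \<Longrightarrow> j < 2 \<Longrightarrow> TT i j (be a) (be b) n = be (TT i j a b n)"
proof -
  assume i: "i < 2" and j: "j < 2"
  have "m (ia (be (G j (be b)))) (al (ib (G i (be a)))) = (\<lambda>n. be (m (ia (be (G j b))) (al (ib (G i a))) n))"
    by (simp add: fun_eq_iff gc_be[OF i] gc_be[OF j] ia_be be_m be_al_ib)
  then show ?thesis by (simp add: TT_def be_S m_fin)
qed

lemma al_br: "al (br a b n) = br (al a) (al b) n"
  by (simp add: br_eq al_diff al_m sum2 al_add al_sc TT_al)
lemma be_br: "be (br a b n) = br (be a) (be b) n"
  by (simp add: br_eq be_diff be_m sum2 be_add be_sc TT_be)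

lemma TT_D1: "i < 2 \<Longrightarrow> TT i j (D a) b = - shiftL (TT i j a b)"
proof -
  assume i: "i < 2"
  let ?Y = "ia (be (G j b))" and ?X = "al (ib (G i a))"
  have "TT i j (D a) b = S (m ?Y (D ?X))" by (simp add: TT_def gc_D[OF i] ib_D al_D)
  also have "\<dots> = S ((\<lambda>n. D (m ?Y ?X n)) + shiftL (m ?Y ?X))" by (simp add: m_D2)
  also have "\<dots> = S (\<lambda>n. D (m ?Y ?X n)) + S (shiftL (m ?Y ?X))"
    by (rule S_add) (simp_all add: fin1_Dp fin1_shiftL m_fin)
  also have "\<dots> = - shiftL (TT i j a b)"
    by (simp add: S_Dp S_Lm m_fin TT_def fun_eq_iff)
  finally show ?thesis .
qed

lemma TT_D2: "j < 2 \<Longrightarrow> TT i j a (D b) = (\<lambda>k. D (TT i j a b k)) + shiftL (TT i j a b)"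
proof -
  assume j: "j < 2"
  let ?Y = "ia (be (G j b))" and ?X = "al (ib (G i a))"
  have "TT i j a (D b) = S (m (D ?Y) ?X)" by (simp add: TT_def gc_D[OF j] be_D ia_D)
  also have "\<dots> = S (- shiftL (m ?Y ?X))" by (simp add: m_D1)
  also have "\<dots> = - S (shiftL (m ?Y ?X))" by (rule S_neg) (simp add: fin1_shiftL m_fin)
  also have "\<dots> = (\<lambda>k. D (TT i j a b k)) + shiftL (TT i j a b)"
    by (simp add: S_Lm m_fin TT_def fun_eq_iff)
  finally show ?thesis .
qed

lemma br_D1: "br (D a) b n = - shiftL (br a b) n"
  by (cases n) (simp_all add: br_eq sum2 TT_D1 m_D1 shiftL_def)

lemma br_D2: "br a (D b) n = D (br a b n) + shiftL (br a b) n"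
  by (cases n) (simp_all add: br_eq sum2 TT_D2 m_D2 shiftL_def D_diff D_add D_scale)

end

context bh begin

lemma fin1_MM: "fin1 (MM x y)" by (simp add: MM_lprod lprod_fin)

lemma al_Cbr: "al (Cbr MM s u v n) = Cbr MM s (al u) (al v) n"
  by (simp add: Cbr_def opp_def al_diff al_sc al_S fin1_MM al_MM)
lemma be_Cbr: "be (Cbr MM s u v n) = Cbr MM s (be u) (be v) n"
  by (simp add: Cbr_def opp_def be_diff be_sc be_S fin1_MM be_MM)

lemma skew:
  assumes i: "i < 2" and j: "j < 2" and a: "a \<in> Rg i" and b: "b \<in> Rg j"
  shows "br (be a) (al b) n = - scale ((-1) ^ (i * j)) (S (br (be b) (al a)) n)"
proof -
  let ?s = "(-1::complex) ^ (i * j)"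
  let ?X = "al (be a)" and ?Y = "al (be b)"
  have ss: "?s * ?s = 1" using sgn_lemmas(4)[OF i j i] .
  have e1: "br (be a) (al b) = Cbr MM ?s ?X ?Y"
    using br_hom[OF i j be_Rg[OF i a] al_Rg[OF j b]] by (simp add: al_be)
  have e2: "br (be b) (al a) = MM ?Y ?X - (\<lambda>n. scale ?s (S (MM ?X ?Y) n))"
    using br_hom[OF j i be_Rg[OF j b] al_Rg[OF i a]]
    by (simp add: al_be Cbr_def opp_def fun_eq_iff mult.commute)
  have "S (br (be b) (al a)) = S (MM ?Y ?X) - S (\<lambda>n. scale ?s (S (MM ?X ?Y) n))"
    unfolding e2 by (rule S_diff) (simp_all add: fin1_MM fin1_sc fin1_S)
  also have "\<dots> = S (MM ?Y ?X) - (\<lambda>k. scale ?s (MM ?X ?Y k))"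
    by (simp add: S_sc fin1_S fin1_MM SS)
  finally have "S (br (be b) (al a)) n = S (MM ?Y ?X) n - scale ?s (MM ?X ?Y n)" by simp
  then show ?thesis
    by (simp add: e1 Cbr_def opp_def scale_right_diff_distrib ss)
qed

lemma jacobi:
  assumes i: "i < 2" and j: "j < 2" and k: "k < 2" and a: "a \<in> Rg i" and b: "b \<in> Rg j" and c: "c \<in> Rg k"
  shows "br (al (be a)) (br b c q) p
     = plus_subst scale br (br (be a) b) (be c) p q + scale ((-1) ^ (i * j)) (br (be b) (br (al a) c p) q)"
proof -
  let ?X = "al (al (be a))" and ?Y = "al (be b)" and ?Z = "be (be c)"
  let ?a = "(-1::complex) ^ (i * j)" and ?b = "(-1::complex) ^ (i * k)" and ?c = "(-1::complex) ^ (j * k)"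
  have jk: "(j + k) mod 2 < 2" and ij: "(i + j) mod 2 < 2" and ik: "(i + k) mod 2 < 2" by simp_all
  have lhs: "br (al (be a)) (br b c q) p = Cbr MM (?a * ?b) ?X (Cbr MM ?c ?Y ?Z q) p"
  proof -
    have w: "br b c q \<in> Rg ((j + k) mod 2)" by (rule br_Rg[OF j k b c])
    have "br (al (be a)) (br b c q) = Cbr MM ((-1) ^ (i * ((j + k) mod 2))) ?X (be (br b c q))"
      by (rule br_hom[OF i jk al_Rg[OF i be_Rg[OF i a]] w])
    moreover have "be (br b c q) = Cbr MM ?c ?Y ?Z q"
      by (simp add: br_hom[OF j k b c] be_Cbr al_be)
    ultimately show ?thesis by (simp add: sgn_lemmas(1)[OF i j k])
  qed
  have rhs1: "plus_subst scale br (br (be a) b) (be c) p q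
      = plus_subst scale (Cbr MM (?b * ?c)) (Cbr MM ?a ?X ?Y) ?Z p q"
  proof -
    have d: "br (be a) b = Cbr MM ?a (al (be a)) (be b)" by (rule br_hom[OF i j be_Rg[OF i a] b])
    have t: "br (Cbr MM ?a (al (be a)) (be b) t) (be c) = Cbr MM (?b * ?c) (Cbr MM ?a ?X ?Y t) ?Z" for t
    proof -
      have mem: "Cbr MM ?a (al (be a)) (be b) t \<in> Rg ((i + j) mod 2)"
        by (rule Cbr_Rg[OF i j al_Rg[OF i be_Rg[OF i a]] be_Rg[OF j b]])
      show ?thesis
        by (simp add: br_hom[OF ij k mem be_Rg[OF k c]] al_Cbr sgn_lemmas(2)[OF i j k])
    qed
    show ?thesis unfolding d plus_subst_def by (simp add: t)
  qed
  have rhs2: "br (be b) (br (al a) c p) q = Cbr MM (?a * ?c) ?Y (Cbr MM ?b ?X ?Z p) q"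
  proof -
    have w: "br (al a) c p \<in> Rg ((i + k) mod 2)" by (rule br_Rg[OF i k al_Rg[OF i a] c])
    have "br (be b) (br (al a) c p) = Cbr MM ((-1) ^ (j * ((i + k) mod 2))) ?Y (be (br (al a) c p))"
      by (simp add: br_hom[OF j ik be_Rg[OF j b] w] al_be)
    moreover have "be (br (al a) c p) = Cbr MM ?b ?X ?Z p"
      by (simp add: br_hom[OF i k al_Rg[OF i a] c] be_Cbr al_be)
    ultimately show ?thesis by (simp add: sgn_lemmas(3)[OF i j k])
  qed
  show ?thesis
    unfolding lhs rhs1 rhs2
    by (rule core_jacobi[OF MM_lprod MM_ses1 MM_ses2 MM_assoc sgn_lemmas(4)[OF i j k]])
qed

end

theorem mainTheorem5:
  fixes scale :: "complex \<Rightarrow> 'r::ab_group_add \<Rightarrow> 'r"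
    and D al be :: "'r \<Rightarrow> 'r"
    and Rg :: "nat \<Rightarrow> 'r set"
    and m :: "'r \<Rightarrow> 'r \<Rightarrow> nat \<Rightarrow> 'r"
  assumes "regular_BiHom_assoc_conf_super scale D Rg m al be"
  shows "BiHom_Lie_conf_super scale D Rg (induced_bracket scale D Rg m al be) al be"
proof -
  have GC: "graded_CD_module scale D Rg" and cl: "clin scale al" "clin scale be"
    and c1: "al \<circ> be = be \<circ> al" and c2: "al \<circ> D = D \<circ> al" and c3: "be \<circ> D = D \<circ> be"
    using assms unfolding regular_BiHom_assoc_conf_super_def BiHom_assoc_conf_super_def by auto
  have vs: "vector_space scale" and cD: "clin scale D" using GC by (auto simp: graded_CD_module_def)
  have md: "module scale" using vs by (simp add: module_def vector_space_def)
  interpret bh scale D Rg m al be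
    by (rule bh.intro[OF cfa.intro[OF md] bh_axioms.intro])
       (use cD assms in \<open>simp_all add: cfa_axioms_def clin_def\<close>)
  have glp: "graded_lprod scale Rg br"
    unfolding graded_lprod_def
  proof (intro conjI allI impI ballI)
    fix a b show "finite {n. br a b n \<noteq> 0}"
      using br_fin[of a b] unfolding fin1_def
      by (metis (mono_tags, lifting) finite_nat_set_iff_bounded mem_Collect_eq)
  next
    fix b n show "clin scale (\<lambda>a. br a b n)" by (simp add: clin_def br_add1 br_sc1)
  next
    fix a n show "clin scale (\<lambda>b. br a b n)" by (simp add: clin_def br_add2 br_sc2)
  next
    fix i j a b n assume "i < (2::nat)" "j < (2::nat)" "a \<in> Rg i" "b \<in> Rg j"
    then show "br a b n \<in> Rg ((i + j) mod 2)" by (rule br_Rg)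
  qed
  show ?thesis
    unfolding BiHom_Lie_conf_super_def
    using GC glp cl c1 c2 c3
    by (simp add: al_br be_br br_D1 br_D2 skew jacobi)
qed


end
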